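(* Let $Z_1,\dots,Z_m$ be $n\times n$ complex matrices such that the singular values $r_{i1},\dots,r_{in}$ of $Z_i$ satisfy $0\le r_{ik}<1$ for all $i,k$. Let $U$ be an $n\times n$ unitary matrix and $w_1,\dots,w_m>0$ with $\sum_{i=1}^m w_i=1$. Then $$\frac{\det\big(I-\sum_{i=1}^m w_iZ_i^*Z_i\big)}{\big|\det(I-U\sum_{i=1}^m w_i|Z_i|)\big|^2}\le \prod_{k=1}^n\prod_{i=1}^m\left(\frac{1+r_{ik}}{1-r_{ik}}\right)^{w_i}.$$ Equality holds if and only if all $|Z_i|$ equal a common matrix $Z$ and the spectrum of $UZ$ (with multiplicities) equals that of $Z$ (in which case $U=I$ if $Z$ is nonsingular).
   Context: $Z^*$ denotes the conjugate transpose; $|Z|=(Z^*Z)^{1/2}$ is the positive semidefinite square root of $Z^*Z$; $I$ is the $n\times n$ identity matrix. *)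

theory Defs
  imports "Jordan_Normal_Form.Char_Poly"
begin

definition adj_mat :: "complex mat \<Rightarrow> complex mat" where
  "adj_mat A = mat (dim_col A) (dim_row A) (\<lambda>(i,j). cnj (A $$ (j,i)))"

definition unitary_mat :: "nat \<Rightarrow> complex mat \<Rightarrow> bool" where
  "unitary_mat n U \<longleftrightarrow> U \<in> carrier_mat n n \<and> adj_mat U * U = 1\<^sub>m n"

definition psd_mat :: "nat \<Rightarrow> complex mat \<Rightarrow> bool" where
  "psd_mat n P \<longleftrightarrow> P \<in> carrier_mat n n \<and> adj_mat P = P \<and>
     (\<forall>v \<in> carrier_vec n. 0 \<le> Re (map_vec cnj v \<bullet> (P *\<^sub>v v)))"

definition abs_mat :: "complex mat \<Rightarrow> complex mat" where
  "abs_mat Z = (THE P. psd_mat (dim_col Z) P \<and> P * P = adj_mat Z * Z)"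

definition wsum_mat :: "nat \<Rightarrow> nat \<Rightarrow> (nat \<Rightarrow> real) \<Rightarrow> (nat \<Rightarrow> complex mat) \<Rightarrow> complex mat" where
  "wsum_mat n m w A = mat n n (\<lambda>(j,l). \<Sum>i<m. complex_of_real (w i) * A i $$ (j,l))"

end

theory Submission
  imports Defs "Jordan_Normal_Form.Schur_Decomposition" "HOL-Analysis.Convex"
begin


lemma adj_mat_dim[simp]: "dim_row (adj_mat A) = dim_col A" "dim_col (adj_mat A) = dim_row A"
  by (auto simp: adj_mat_def)

lemma adj_mat_index[simp]: "i < dim_col A \<Longrightarrow> j < dim_row A \<Longrightarrow> adj_mat A $$ (i,j) = cnj (A $$ (j,i))"
  by (auto simp: adj_mat_def)

lemma adj_mat_carrier[simp]: "A \<in> carrier_mat m n \<Longrightarrow> adj_mat A \<in> carrier_mat n m"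
  unfolding carrier_mat_def by simp

lemma adj_adj[simp]: "adj_mat (adj_mat A) = A"
  by (rule eq_matI, auto)

lemma adj_mult: assumes "A \<in> carrier_mat m n" "B \<in> carrier_mat n p"
  shows "adj_mat (A * B) = adj_mat B * adj_mat A"
proof (rule eq_matI)
  fix i j assume "i < dim_row (adj_mat B * adj_mat A)" "j < dim_col (adj_mat B * adj_mat A)"
  hence i: "i < p" and j: "j < m" using assms by auto
  have "adj_mat (A * B) $$ (i,j) = cnj (\<Sum>k\<in>{0..<n}. A $$ (j,k) * B $$ (k,i))"
    using assms i j by (simp add: scalar_prod_def)
  also have "\<dots> = (\<Sum>k\<in>{0..<n}. cnj (B $$ (k,i)) * cnj (A $$ (j,k)))"
    by (simp add: mult.commute)
  also have "\<dots> = (adj_mat B * adj_mat A) $$ (i,j)"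
    using assms i j by (simp add: scalar_prod_def)
  finally show "adj_mat (A * B) $$ (i,j) = (adj_mat B * adj_mat A) $$ (i,j)" .
qed (use assms in auto)

lemma adj_add: assumes "A \<in> carrier_mat m n" "B \<in> carrier_mat m n"
  shows "adj_mat (A + B) = adj_mat A + adj_mat B"
  using assms by (intro eq_matI, auto)

lemma adj_minus: assumes "A \<in> carrier_mat m n" "B \<in> carrier_mat m n"
  shows "adj_mat (A - B) = adj_mat A - adj_mat B"
  using assms by (intro eq_matI, auto)

lemma adj_one[simp]: "adj_mat (1\<^sub>m n) = 1\<^sub>m n"
  by (intro eq_matI, auto)

lemma adj_zero[simp]: "adj_mat (0\<^sub>m n m) = 0\<^sub>m m n"
  by (intro eq_matI, auto)

lemma adj_smult: "adj_mat (c \<cdot>\<^sub>m A) = cnj c \<cdot>\<^sub>m adj_mat A"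
  by (intro eq_matI, auto)

lemma unitary_carrier: "unitary_mat n U \<Longrightarrow> U \<in> carrier_mat n n"
  by (simp add: unitary_mat_def)

lemma unitary_left: "unitary_mat n U \<Longrightarrow> adj_mat U * U = 1\<^sub>m n"
  by (simp add: unitary_mat_def)

lemma unitary_right: "unitary_mat n U \<Longrightarrow> U * adj_mat U = 1\<^sub>m n"
  unfolding unitary_mat_def using mat_mult_left_right_inverse[of "adj_mat U" n U]
  by auto

lemma unitary_adj: "unitary_mat n U \<Longrightarrow> unitary_mat n (adj_mat U)"
  using unitary_right[of n U] unfolding unitary_mat_def by auto

lemma unitary_mult: assumes "unitary_mat n U" "unitary_mat n V"
  shows "unitary_mat n (U * V)"
proof -
  have U: "U \<in> carrier_mat n n" and V: "V \<in> carrier_mat n n" using assms unitary_carrier by auto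
  have "adj_mat (U * V) * (U * V) = adj_mat V * (adj_mat U * (U * V))"
    using U V by (simp add: adj_mult assoc_mult_mat[of _ n n _ n _ n])
  also have "adj_mat U * (U * V) = (adj_mat U * U) * V"
    using U V by (simp add: assoc_mult_mat[of _ n n _ n _ n])
  also have "adj_mat V * (\<dots>) = 1\<^sub>m n" using assms unitary_left[of n U] unitary_left[of n V] V by simp
  finally show ?thesis using U V unfolding unitary_mat_def by auto
qed

lemma unitary_one: "unitary_mat n (1\<^sub>m n)"
  unfolding unitary_mat_def by auto

interpretation cnj_hom: comm_ring_hom cnj
  by (unfold_locales, auto)

lemma det_adj: assumes "A \<in> carrier_mat n n" shows "det (adj_mat A) = cnj (det A)"
proof -
  have "adj_mat A = transpose_mat (map_mat cnj A)"
    using assms by (intro eq_matI, auto)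
  then show ?thesis using assms by (simp add: det_transpose)
qed

lemma unitary_det: assumes "unitary_mat n U" shows "cmod (det U) = 1"
proof -
  have U: "U \<in> carrier_mat n n" using assms unitary_carrier by auto
  have "det (adj_mat U * U) = 1" using unitary_left[OF assms] by simp
  hence "cnj (det U) * det U = 1" using U by (simp add: det_mult[of _ n] det_adj)
  hence "cmod (cnj (det U) * det U) = 1" by simp
  hence "cmod (det U) * cmod (det U) = 1" by (simp only: norm_mult complex_mod_cnj)
  hence "(cmod (det U) - 1) * (cmod (det U) + 1) = 0" by (simp add: algebra_simps)
  moreover have "cmod (det U) + 1 \<noteq> 0" using norm_ge_zero[of "det U"] by linarith
  ultimately show ?thesis by simp
qed

lemma conj_complex[simp]: "conjugate (x::complex) = cnj x"
  by (simp add: conjugate_complex_def)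

lemma cscalar_smult: assumes "v \<in> carrier_vec n" "w \<in> carrier_vec n"
  shows "(a \<cdot>\<^sub>v v) \<bullet>c (b \<cdot>\<^sub>v (w::complex vec)) = a * cnj b * (v \<bullet>c w)"
  using assms by (simp add: scalar_prod_def sum_distrib_left algebra_simps)

lemma cscalar_self_real: fixes w :: "complex vec"
  shows "w \<bullet>c w = complex_of_real (Re (w \<bullet>c w)) \<and> Re (w \<bullet>c w) \<ge> 0"
proof -
  have "0 \<le> w \<bullet>c w" by (rule conjugate_square_ge_0_vec)
  thus ?thesis by (auto simp: less_eq_complex_def complex_eq_iff)
qed

lemma unitary_extend:
  assumes v: "v \<in> carrier_vec n" and v0: "v \<noteq> 0\<^sub>v n"
  shows "\<exists>H c. unitary_mat n H \<and> col H 0 = c \<cdot>\<^sub>v v"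
proof -
  interpret cof_vec_space n "TYPE(complex)" .
  define b where "b = basis_completion v"
  from basis_completion[OF v v0, folded b_def]
  have b: "set b \<subseteq> carrier_vec n" and dist_b: "distinct b" and indep: "\<not> lin_dep (set b)"
    and hdb: "hd b = v" and len_b: "length b = n" by auto
  have n: "n \<noteq> 0"
  proof
    assume "n = 0" hence "v = 0\<^sub>v n" using v by (intro eq_vecI, auto)
    with v0 show False by simp
  qed
  obtain vs where bv: "b = v # vs" using hdb len_b n by (cases b, auto)
  define ws where "ws = gram_schmidt n b"
  from gram_schmidt_result[OF b dist_b indep ws_def]
  have ws: "set ws \<subseteq> carrier_vec n" "corthogonal ws" "length ws = n" using len_b by auto
  have hdws: "hd ws = v" using gram_schmidt_hd[OF v, of vs] bv ws_def by simp
  define nr where "nr = (\<lambda>w::complex vec. Re (w \<bullet>c w))"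
  define us where "us = map (\<lambda>w. complex_of_real (1 / sqrt (nr w)) \<cdot>\<^sub>v w) ws"
  define H where "H = mat_of_cols n us"
  have wsi: "\<And>i. i < n \<Longrightarrow> ws ! i \<in> carrier_vec n" using ws by auto
  have pos: "nr (ws!i) > 0 \<and> ws!i \<bullet>c ws!i = of_real (nr (ws!i))" if i: "i < n" for i
  proof -
    have "ws!i \<bullet>c ws!i \<noteq> 0" using ws(2) i ws(3) unfolding corthogonal_def by auto
    moreover have "Re (ws!i \<bullet>c ws!i) \<noteq> 0"
    proof
      assume "Re (ws!i \<bullet>c ws!i) = 0"
      hence "ws!i \<bullet>c ws!i = 0" using cscalar_self_real[of "ws!i"] by simp
      with calculation show False by simp
    qed
    ultimately show ?thesis using cscalar_self_real[of "ws!i"] unfolding nr_def by auto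
  qed
  have len_us: "length us = n" using ws by (simp add: us_def)
  have usi: "us ! i = complex_of_real (1 / sqrt (nr (ws!i))) \<cdot>\<^sub>v ws ! i" if "i < n" for i
    using that ws by (simp add: us_def)
  have usc: "us ! i \<in> carrier_vec n" if "i < n" for i using usi[OF that] wsi[OF that] by simp
  have Hc: "H \<in> carrier_mat n n" unfolding H_def using len_us mat_of_cols_carrier(1)[of n us] by simp
  have colH: "col H j = us ! j" if "j < n" for j
    unfolding H_def using that len_us usc by (simp add: col_mat_of_cols)
  have "adj_mat H * H = 1\<^sub>m n"
  proof (rule eq_matI)
    fix i j assume "i < dim_row (1\<^sub>m n)" "j < dim_col (1\<^sub>m n)"
    hence i: "i < n" and j: "j < n" by auto
    have "(adj_mat H * H) $$ (i,j) = (\<Sum>k\<in>{0..<n}. cnj (H $$ (k,i)) * H $$ (k,j))"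
      using Hc i j by (simp add: scalar_prod_def)
    also have "\<dots> = col H j \<bullet>c col H i"
      using Hc i j by (simp add: scalar_prod_def mult.commute)
    also have "\<dots> = complex_of_real (1 / sqrt (nr (ws!j))) * cnj (complex_of_real (1 / sqrt (nr (ws!i))))
        * (ws!j \<bullet>c ws!i)"
      unfolding colH[OF i] colH[OF j] usi[OF i] usi[OF j] by (rule cscalar_smult[OF wsi[OF j] wsi[OF i]])
    also have "\<dots> = 1\<^sub>m n $$ (i,j)"
    proof (cases "i = j")
      case True
      have p: "nr (ws!i) > 0" and e: "ws!i \<bullet>c ws!i = of_real (nr (ws!i))" using pos[OF i] by auto
      have ss: "sqrt (nr (ws!i)) * sqrt (nr (ws!i)) = nr (ws!i)" using p by simp
      have r: "1 / sqrt (nr (ws!i)) * (1 / sqrt (nr (ws!i))) * nr (ws!i) = 1"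
        using p ss by (simp add: field_simps)
      have "complex_of_real (1 / sqrt (nr (ws!i))) * cnj (complex_of_real (1 / sqrt (nr (ws!i)))) * of_real (nr (ws!i))
          = complex_of_real (1 / sqrt (nr (ws!i)) * (1 / sqrt (nr (ws!i))) * nr (ws!i))"
        by (simp only: of_real_mult complex_cnj_complex_of_real)
      also have "\<dots> = 1" unfolding r by simp
      finally have cc: "complex_of_real (1 / sqrt (nr (ws!i))) * cnj (complex_of_real (1 / sqrt (nr (ws!i)))) * of_real (nr (ws!i)) = 1" .
      show ?thesis unfolding True[symmetric] e cc using i by simp
    next
      case False
      have "ws!j \<bullet>c ws!i = 0" using ws(2) ws(3) i j False unfolding corthogonal_def by auto
      thus ?thesis using False i j by simp
    qed
    finally show "(adj_mat H * H) $$ (i,j) = 1\<^sub>m n $$ (i,j)" .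
  qed (use Hc in auto)
  hence "unitary_mat n H" using Hc unfolding unitary_mat_def by simp
  moreover have "col H 0 = complex_of_real (1 / sqrt (nr v)) \<cdot>\<^sub>v v"
    using colH[of 0] usi[of 0] n hdws ws(3) by (cases ws, auto)
  ultimately show ?thesis by blast
qed

definition dmat :: "nat \<Rightarrow> (nat \<Rightarrow> complex) \<Rightarrow> complex mat" where
  "dmat n d = mat n n (\<lambda>(i,j). if i = j then d i else 0)"

lemma dmat_carrier[simp]: "dmat n d \<in> carrier_mat n n" by (simp add: dmat_def)
lemma dmat_dim[simp]: "dim_row (dmat n d) = n" "dim_col (dmat n d) = n" by (auto simp: dmat_def)
lemma dmat_index[simp]: "i < n \<Longrightarrow> j < n \<Longrightarrow> dmat n d $$ (i,j) = (if i = j then d i else 0)"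
  by (simp add: dmat_def)

lemma adj_four_block:
  assumes "A \<in> carrier_mat a a'" "B \<in> carrier_mat a b'" "C \<in> carrier_mat b a'" "D \<in> carrier_mat b b'"
  shows "adj_mat (four_block_mat A B C D) = four_block_mat (adj_mat A) (adj_mat C) (adj_mat B) (adj_mat D)"
  using assms by (intro eq_matI, auto)

lemma mat_vec_unit_index: assumes "(A :: complex mat) \<in> carrier_mat m n" "i < m" "j < n"
  shows "(A *\<^sub>v unit_vec n j) $ i = A $$ (i,j)"
proof -
  have "(A *\<^sub>v unit_vec n j) $ i = row A i \<bullet> unit_vec n j" using assms by simp
  also have "\<dots> = (row A i) $ j" using assms scalar_prod_right_unit[of j n "row A i"] by simp
  also have "\<dots> = A $$ (i,j)" using assms by simp
  finally show ?thesis .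
qed

lemma assoc5: assumes "X \<in> carrier_mat n n" "Y \<in> carrier_mat n n" "A \<in> carrier_mat n n"
  "Z \<in> carrier_mat n n" "W \<in> carrier_mat n n"
  shows "(X * Y) * A * (Z * W) = X * (Y * A * Z) * W"
proof -
  have "(X * Y) * A * (Z * W) = X * (Y * (A * (Z * W)))"
    using assms by (simp add: assoc_mult_mat[of _ n n _ n _ n])
  also have "Y * (A * (Z * W)) = (Y * A * Z) * W"
    using assms by (simp add: assoc_mult_mat[of _ n n _ n _ n])
  also have "X * \<dots> = X * (Y * A * Z) * W"
    using assms by (simp add: assoc_mult_mat[of _ n n _ n _ n])
  finally show ?thesis .
qed

lemma hermitian_spectral:
  assumes "A \<in> carrier_mat n n" "adj_mat A = A"
  shows "\<exists>V d. unitary_mat n V \<and> adj_mat V * A * V = dmat n (\<lambda>i. complex_of_real (d i))"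
  using assms
proof (induction n arbitrary: A)
  case 0
  have "adj_mat (1\<^sub>m 0) * A * 1\<^sub>m 0 = dmat 0 (\<lambda>i. complex_of_real ((\<lambda>i. 0) i))"
    using 0 by (intro eq_matI, auto)
  thus ?case using unitary_one[of 0] by (intro exI[of _ "1\<^sub>m 0"] exI[of _ "\<lambda>i. 0"], simp)
next
  case (Suc k A)
  let ?n = "Suc k"
  have A: "A \<in> carrier_mat ?n ?n" and hA: "adj_mat A = A" using Suc.prems by auto
  have "degree (char_poly A) = ?n" using degree_monic_char_poly[OF A] by auto
  hence "\<not> constant (poly (char_poly A))" by (simp add: constant_degree)
  then obtain e where "poly (char_poly A) e = 0" using fundamental_theorem_of_algebra by blast
  hence ev: "eigenvalue A e" using eigenvalue_root_char_poly[OF A] by simp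
  define v where "v = find_eigenvector A e"
  have "eigenvector A v e" using find_eigenvector[OF A ev] v_def by simp
  hence v: "v \<in> carrier_vec ?n" and v0: "v \<noteq> 0\<^sub>v ?n" and Av: "A *\<^sub>v v = e \<cdot>\<^sub>v v"
    using A unfolding eigenvector_def by auto
  obtain H c where H: "unitary_mat ?n H" and colH: "col H 0 = c \<cdot>\<^sub>v v"
    using unitary_extend[OF v v0] by blast
  have Hc: "H \<in> carrier_mat ?n ?n" using H unitary_carrier by auto
  define B where "B = adj_mat H * A * H"
  have Bc: "B \<in> carrier_mat ?n ?n" using Hc A unfolding B_def by auto
  have hB: "adj_mat B = B" unfolding B_def using Hc A hA
    by (simp add: adj_mult[of _ ?n ?n _ ?n] assoc_mult_mat[of _ ?n ?n _ ?n _ ?n])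
  have Hu: "H *\<^sub>v unit_vec ?n 0 = c \<cdot>\<^sub>v v"
    unfolding colH[symmetric] using Hc by (intro eq_vecI, auto simp: mat_vec_unit_index)
  have "B *\<^sub>v unit_vec ?n 0 = (adj_mat H * A) *\<^sub>v (H *\<^sub>v unit_vec ?n 0)"
    unfolding B_def using Hc A by (intro assoc_mult_mat_vec[of _ ?n ?n _ ?n], auto)
  also have "\<dots> = adj_mat H *\<^sub>v (A *\<^sub>v (H *\<^sub>v unit_vec ?n 0))"
    using Hc A by (intro assoc_mult_mat_vec[of _ ?n ?n _ ?n], auto)
  also have "\<dots> = adj_mat H *\<^sub>v (A *\<^sub>v (c \<cdot>\<^sub>v v))" unfolding Hu ..
  also have "\<dots> = adj_mat H *\<^sub>v (e \<cdot>\<^sub>v (c \<cdot>\<^sub>v v))"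
    using A v Av by (simp add: mult_mat_vec[of _ ?n ?n] smult_smult_assoc mult.commute)
  also have "\<dots> = e \<cdot>\<^sub>v (adj_mat H *\<^sub>v (H *\<^sub>v unit_vec ?n 0))"
    unfolding Hu using Hc v by (simp add: mult_mat_vec[of _ ?n ?n])
  also have "adj_mat H *\<^sub>v (H *\<^sub>v unit_vec ?n 0) = (adj_mat H * H) *\<^sub>v unit_vec ?n 0"
    using Hc by (simp add: assoc_mult_mat_vec[of _ ?n ?n _ ?n])
  also have "\<dots> = unit_vec ?n 0" using unitary_left[OF H] by simp
  finally have Bu: "B *\<^sub>v unit_vec ?n 0 = e \<cdot>\<^sub>v unit_vec ?n 0" .
  have col0: "B $$ (i,0) = (if i = 0 then e else 0)" if "i < ?n" for i
    using arg_cong[OF Bu, of "\<lambda>w. w $ i"] that mat_vec_unit_index[OF Bc that, of 0] by auto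
  have er: "cnj e = e"
  proof -
    have "B $$ (0,0) = adj_mat B $$ (0,0)" using hB by simp
    also have "\<dots> = cnj (B $$ (0,0))" using Bc by simp
    finally show ?thesis using col0[of 0] by simp
  qed
  have row0: "B $$ (0,j) = (if j = 0 then e else 0)" if "j < ?n" for j
  proof -
    have "B $$ (0,j) = adj_mat B $$ (0,j)" using hB by simp
    also have "\<dots> = cnj (B $$ (j,0))" using Bc that by simp
    finally show ?thesis using col0[OF that] er by simp
  qed
  define A' where "A' = mat k k (\<lambda>(i,j). B $$ (Suc i, Suc j))"
  have A'c: "A' \<in> carrier_mat k k" unfolding A'_def by simp
  have hA': "adj_mat A' = A'"
  proof (rule eq_matI)
    fix i j assume "i < dim_row A'" "j < dim_col A'"
    hence i: "i < k" and j: "j < k" unfolding A'_def by auto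
    have "adj_mat A' $$ (i,j) = cnj (B $$ (Suc j, Suc i))" using i j by (simp add: A'_def)
    also have "\<dots> = adj_mat B $$ (Suc i, Suc j)" using Bc i j by simp
    finally show "adj_mat A' $$ (i,j) = A' $$ (i,j)" using hB i j by (simp add: A'_def)
  qed (auto simp: A'_def)
  from Suc.IH[OF A'c hA'] obtain V' d' where V': "unitary_mat k V'"
    and dV': "adj_mat V' * A' * V' = dmat k (\<lambda>i. complex_of_real (d' i))" by blast
  have V'c: "V' \<in> carrier_mat k k" using V' unitary_carrier by auto
  define V'' where "V'' = four_block_mat (1\<^sub>m 1) (0\<^sub>m 1 k) (0\<^sub>m k 1) V'"
  have V''c: "V'' \<in> carrier_mat ?n ?n" unfolding V''_def using V'c
    using four_block_carrier_mat[of "1\<^sub>m 1" 1 1 V' k k] by simp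
  have aV'': "adj_mat V'' = four_block_mat (1\<^sub>m 1) (0\<^sub>m 1 k) (0\<^sub>m k 1) (adj_mat V')"
    unfolding V''_def using V'c by (subst adj_four_block[of _ 1 1 _ k _ k], auto)
  have "adj_mat V'' * V'' = four_block_mat (1\<^sub>m 1) (0\<^sub>m 1 k) (0\<^sub>m k 1) (1\<^sub>m k)"
    unfolding aV'' unfolding V''_def using V'c unitary_left[OF V']
    by (subst mult_four_block_mat[of _ 1 1 _ k _ k _ _ 1 _ k], auto)
  hence uV'': "unitary_mat ?n V''" using V''c unfolding unitary_mat_def by simp
  have Bblock: "B = four_block_mat (mat 1 1 (\<lambda>_. e)) (0\<^sub>m 1 k) (0\<^sub>m k 1) A'"
  proof (rule eq_matI)
    fix i j assume "i < dim_row (four_block_mat (mat 1 1 (\<lambda>_. e)) (0\<^sub>m 1 k) (0\<^sub>m k 1) A')"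
      "j < dim_col (four_block_mat (mat 1 1 (\<lambda>_. e)) (0\<^sub>m 1 k) (0\<^sub>m k 1) A')"
    hence i: "i < ?n" and j: "j < ?n" using A'c by auto
    show "B $$ (i,j) = four_block_mat (mat 1 1 (\<lambda>_. e)) (0\<^sub>m 1 k) (0\<^sub>m k 1) A' $$ (i,j)"
    proof (cases "i = 0 \<or> j = 0")
      case True
      thus ?thesis using i j row0 col0 A'c by auto
    next
      case False
      then obtain i' j' where "i = Suc i'" "j = Suc j'" by (cases i; cases j, auto)
      thus ?thesis using i j A'c by (auto simp: A'_def)
    qed
  qed (use Bc A'c in auto)
  define V where "V = H * V''"
  have uV: "unitary_mat ?n V" unfolding V_def by (rule unitary_mult[OF H uV''])
  have aVc: "adj_mat V'' \<in> carrier_mat ?n ?n" using V''c by simp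
  have "adj_mat V * A * V = adj_mat V'' * B * V''"
    unfolding V_def B_def using Hc V''c A aVc
    by (simp add: adj_mult[of _ ?n ?n _ ?n] assoc5[of _ ?n])
  also have "adj_mat V'' * B = four_block_mat (mat 1 1 (\<lambda>_. e)) (0\<^sub>m 1 k) (0\<^sub>m k 1) (adj_mat V' * A')"
    unfolding aV'' Bblock using V'c A'c
    by (subst mult_four_block_mat[of _ 1 1 _ k _ k _ _ 1 _ k], auto)
  also have "\<dots> * V'' = four_block_mat (mat 1 1 (\<lambda>_. e)) (0\<^sub>m 1 k) (0\<^sub>m k 1) (adj_mat V' * A' * V')"
    unfolding V''_def using V'c A'c
    by (subst mult_four_block_mat[of _ 1 1 _ k _ k _ _ 1 _ k], auto)
  also have "\<dots> = dmat ?n (\<lambda>i. complex_of_real ((\<lambda>i. if i = 0 then Re e else d' (i - 1)) i))"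
  proof (rule eq_matI)
    fix i j assume "i < dim_row (dmat ?n (\<lambda>i. complex_of_real ((\<lambda>i. if i = 0 then Re e else d' (i - 1)) i)))"
      "j < dim_col (dmat ?n (\<lambda>i. complex_of_real ((\<lambda>i. if i = 0 then Re e else d' (i - 1)) i)))"
    hence i: "i < ?n" and j: "j < ?n" by auto
    have ee: "complex_of_real (Re e) = e" using er by (simp add: complex_eq_iff)
    show "four_block_mat (mat 1 1 (\<lambda>_. e)) (0\<^sub>m 1 k) (0\<^sub>m k 1) (adj_mat V' * A' * V') $$ (i, j) =
      dmat ?n (\<lambda>i. complex_of_real ((\<lambda>i. if i = 0 then Re e else d' (i - 1)) i)) $$ (i, j)"
      unfolding dV' using i j ee V'c A'c by auto
  qed (use V'c A'c in auto)
  finally show ?case using uV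
    by (intro exI[of _ V] exI[of _ "\<lambda>i. if i = 0 then Re e else d' (i - 1)"], simp)
qed

definition ip :: "complex vec \<Rightarrow> complex vec \<Rightarrow> complex" where
  "ip v w = map_vec cnj v \<bullet> w"

lemma ip_expand: assumes "v \<in> carrier_vec n" "w \<in> carrier_vec n"
  shows "ip v w = (\<Sum>i<n. cnj (v $ i) * w $ i)"
  using assms by (simp add: ip_def scalar_prod_def atLeast0LessThan)

lemma row_dot: assumes "X \<in> carrier_mat m n" "w \<in> carrier_vec n" "i < m"
  shows "row X i \<bullet> w = (\<Sum>k<n. X $$ (i,k) * w $ k)"
  using assms by (simp add: scalar_prod_def atLeast0LessThan)

lemma mat_vec_expand: assumes "X \<in> carrier_mat m n" "w \<in> carrier_vec n" "i < m"
  shows "(X *\<^sub>v w) $ i = (\<Sum>k<n. X $$ (i,k) * w $ k)"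
  using assms by (simp add: row_dot)

lemma cnj_mult_self: "cnj z * z = complex_of_real ((cmod z)^2)"
  by (metis complex_norm_square mult.commute of_real_power)

lemma ip_adj: assumes "X \<in> carrier_mat m n" "v \<in> carrier_vec m" "w \<in> carrier_vec n"
  shows "ip v (X *\<^sub>v w) = ip (adj_mat X *\<^sub>v v) w"
proof -
  have "ip v (X *\<^sub>v w) = (\<Sum>i<m. cnj (v $ i) * (X *\<^sub>v w) $ i)"
    using assms by (intro ip_expand, auto)
  also have "\<dots> = (\<Sum>i<m. cnj (v $ i) * (\<Sum>k<n. X $$ (i,k) * w $ k))"
    using assms by (intro sum.cong refl, simp add: row_dot[of X m n])
  also have "\<dots> = (\<Sum>i<m. \<Sum>k<n. cnj (v $ i) * X $$ (i,k) * w $ k)"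
    by (simp add: sum_distrib_left mult.assoc)
  also have "\<dots> = (\<Sum>k<n. \<Sum>i<m. cnj (v $ i) * X $$ (i,k) * w $ k)"
    by (rule sum.swap)
  also have "\<dots> = (\<Sum>k<n. cnj (\<Sum>i<m. cnj (X $$ (i,k)) * v $ i) * w $ k)"
    by (intro sum.cong refl, simp add: sum_distrib_right sum_distrib_left algebra_simps)
  also have "\<dots> = (\<Sum>k<n. cnj ((adj_mat X *\<^sub>v v) $ k) * w $ k)"
    using assms by (intro sum.cong refl, simp add: row_dot[of "adj_mat X" n m] cnj_sum mult.commute)
  also have "\<dots> = ip (adj_mat X *\<^sub>v v) w"
    using assms mult_mat_vec_carrier[of "adj_mat X" n m v] by (intro ip_expand[symmetric], auto)
  finally show ?thesis .
qed

lemma ip_smult_left: assumes "v \<in> carrier_vec n" "w \<in> carrier_vec n"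
  shows "ip (c \<cdot>\<^sub>v v) w = cnj c * ip v w"
  using assms by (simp add: ip_expand[of _ n] sum_distrib_left algebra_simps)

lemma ip_smult_right: assumes "v \<in> carrier_vec n" "w \<in> carrier_vec n"
  shows "ip v (c \<cdot>\<^sub>v w) = c * ip v w"
  using assms by (simp add: ip_expand[of _ n] sum_distrib_left algebra_simps)

lemma ip_self: assumes "v \<in> carrier_vec n"
  shows "ip v v = complex_of_real (\<Sum>i<n. (cmod (v $ i))^2)"
proof -
  have "ip v v = (\<Sum>i<n. cnj (v $ i) * v $ i)" using assms by (simp add: ip_expand)
  also have "\<dots> = (\<Sum>i<n. complex_of_real ((cmod (v $ i))^2))"
    by (intro sum.cong refl, rule cnj_mult_self)
  finally show ?thesis by simp
qed

lemma sum_sq_zero: assumes "v \<in> carrier_vec n" "(\<Sum>i<n. (cmod (v $ i))^2) = 0"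
  shows "v = 0\<^sub>v n"
proof (rule eq_vecI)
  fix i assume "i < dim_vec (0\<^sub>v n)" hence i: "i < n" by simp
  have "(cmod (v $ i))^2 = 0" using assms(2) sum_nonneg_eq_0_iff[of "{..<n}" "\<lambda>i. (cmod (v $ i))^2"] i
    by auto
  thus "v $ i = 0\<^sub>v n $ i" using i by simp
qed (use assms in auto)

lemma ip_unitary: assumes "unitary_mat n U" "v \<in> carrier_vec n" "w \<in> carrier_vec n"
  shows "ip (U *\<^sub>v v) (U *\<^sub>v w) = ip v w"
proof -
  have U: "U \<in> carrier_mat n n" using assms unitary_carrier by auto
  have "ip (U *\<^sub>v v) (U *\<^sub>v w) = ip (adj_mat U *\<^sub>v (U *\<^sub>v v)) w"
    using U assms by (intro ip_adj[of _ n n], auto)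
  also have "adj_mat U *\<^sub>v (U *\<^sub>v v) = (adj_mat U * U) *\<^sub>v v"
    using U assms by (intro assoc_mult_mat_vec[of _ n n _ n, symmetric], auto)
  also have "\<dots> = v" using unitary_left[OF assms(1)] assms by simp
  finally show ?thesis .
qed

lemma dmat_mult_vec: assumes "y \<in> carrier_vec n"
  shows "dmat n d *\<^sub>v y = vec n (\<lambda>k. d k * y $ k)"
proof (rule eq_vecI)
  fix i assume "i < dim_vec (vec n (\<lambda>k. d k * y $ k))" hence i: "i < n" by simp
  have "(dmat n d *\<^sub>v y) $ i = (\<Sum>k<n. dmat n d $$ (i,k) * y $ k)"
    using assms i by (intro mat_vec_expand, auto)
  also have "\<dots> = (\<Sum>k<n. if i = k then d i * y $ k else 0)"
    using i by (intro sum.cong refl, auto)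
  also have "\<dots> = d i * y $ i" using i by simp
  finally show "(dmat n d *\<^sub>v y) $ i = vec n (\<lambda>k. d k * y $ k) $ i" using i by simp
qed simp

lemma ip_dmat: assumes "y \<in> carrier_vec n"
  shows "ip y (dmat n (\<lambda>k. complex_of_real (d k)) *\<^sub>v y) = complex_of_real (\<Sum>k<n. d k * (cmod (y $ k))^2)"
proof -
  have "ip y (dmat n (\<lambda>k. complex_of_real (d k)) *\<^sub>v y) = (\<Sum>k<n. cnj (y $ k) * (complex_of_real (d k) * y $ k))"
    using assms by (simp add: dmat_mult_vec ip_expand[of _ n])
  also have "\<dots> = (\<Sum>k<n. complex_of_real (d k * (cmod (y $ k))^2))"
  proof (intro sum.cong refl)
    fix k show "cnj (y $ k) * (complex_of_real (d k) * y $ k) = complex_of_real (d k * (cmod (y $ k))^2)"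
      using cnj_mult_self[of "y $ k"] by (simp add: algebra_simps)
  qed
  finally show ?thesis by simp
qed

lemma spectral_form: assumes "A \<in> carrier_mat n n" "adj_mat A = A"
  shows "\<exists>V d. unitary_mat n V \<and> A = V * dmat n (\<lambda>i. complex_of_real (d i)) * adj_mat V
     \<and> adj_mat V * A * V = dmat n (\<lambda>i. complex_of_real (d i))"
proof -
  obtain V d where V: "unitary_mat n V" and D: "adj_mat V * A * V = dmat n (\<lambda>i. complex_of_real (d i))"
    using hermitian_spectral[OF assms] by blast
  have Vc: "V \<in> carrier_mat n n" using V unitary_carrier by auto
  have "V * dmat n (\<lambda>i. complex_of_real (d i)) * adj_mat V = (V * adj_mat V) * A * (V * adj_mat V)"
    unfolding D[symmetric] using Vc assms by (simp add: assoc5[of _ n])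
  also have "\<dots> = A" using unitary_right[OF V] assms by simp
  finally show ?thesis using V D by metis
qed

lemma form_decomp: assumes V: "unitary_mat n V" and A: "A = V * dmat n (\<lambda>i. complex_of_real (d i)) * adj_mat V"
  and v: "v \<in> carrier_vec n"
  shows "ip v (A *\<^sub>v v) = complex_of_real (\<Sum>k<n. d k * (cmod ((adj_mat V *\<^sub>v v) $ k))^2)"
proof -
  have Vc: "V \<in> carrier_mat n n" using V unitary_carrier by auto
  let ?D = "dmat n (\<lambda>i. complex_of_real (d i))"
  let ?y = "adj_mat V *\<^sub>v v"
  have aVc: "adj_mat V \<in> carrier_mat n n" using Vc by simp
  have y: "?y \<in> carrier_vec n" using aVc v mult_mat_vec_carrier[of "adj_mat V" n n v] by simp
  have Dy: "?D *\<^sub>v ?y \<in> carrier_vec n" using y mult_mat_vec_carrier[of ?D n n ?y] by simp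
  have "A *\<^sub>v v = (V * ?D) *\<^sub>v ?y"
    unfolding A using Vc v aVc by (intro assoc_mult_mat_vec[of _ n n _ n], auto)
  also have "\<dots> = V *\<^sub>v (?D *\<^sub>v ?y)"
    using Vc y by (intro assoc_mult_mat_vec[of _ n n _ n], auto)
  finally have "ip v (A *\<^sub>v v) = ip v (V *\<^sub>v (?D *\<^sub>v ?y))" by simp
  also have "\<dots> = ip ?y (?D *\<^sub>v ?y)"
    using Vc v Dy by (intro ip_adj[of _ n n], auto)
  finally have "ip v (A *\<^sub>v v) = ip ?y (?D *\<^sub>v ?y)" .
  thus ?thesis using ip_dmat[OF y] by simp
qed

lemma adj_dmat_real: "adj_mat (dmat n (\<lambda>i. complex_of_real (d i))) = dmat n (\<lambda>i. complex_of_real (d i))"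
  by (intro eq_matI, auto)

lemma dmat_mult: "dmat n a * dmat n b = dmat n (\<lambda>i. a i * b i)"
proof (rule eq_matI)
  fix i j assume "i < dim_row (dmat n (\<lambda>i. a i * b i))" "j < dim_col (dmat n (\<lambda>i. a i * b i))"
  hence i: "i < n" and j: "j < n" by auto
  have "(dmat n a * dmat n b) $$ (i,j) = (\<Sum>k<n. dmat n a $$ (i,k) * dmat n b $$ (k,j))"
    using i j by (simp add: row_dot[of "dmat n a" n n])
  also have "\<dots> = (\<Sum>k<n. if k = i then (if i = j then a i * b i else 0) else 0)"
    using i j by (intro sum.cong refl, auto)
  also have "\<dots> = dmat n (\<lambda>i. a i * b i) $$ (i,j)" using i j by simp
  finally show "(dmat n a * dmat n b) $$ (i,j) = dmat n (\<lambda>i. a i * b i) $$ (i,j)" .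
qed auto

lemma herm_of_decomp: assumes "unitary_mat n V" "A = V * dmat n (\<lambda>i. complex_of_real (d i)) * adj_mat V"
  shows "adj_mat A = A"
proof -
  have Vc: "V \<in> carrier_mat n n" using assms unitary_carrier by auto
  let ?D = "dmat n (\<lambda>i. complex_of_real (d i))"
  have "adj_mat (V * ?D * adj_mat V) = adj_mat (adj_mat V) * adj_mat (V * ?D)"
    using Vc by (intro adj_mult[of _ n n _ n], auto)
  also have "adj_mat (V * ?D) = adj_mat ?D * adj_mat V"
    using Vc by (intro adj_mult[of _ n n _ n], auto)
  finally show ?thesis unfolding assms(2) using Vc
    by (simp add: adj_dmat_real assoc_mult_mat[of _ n n _ n _ n])
qed

lemma assoc4: assumes "X \<in> carrier_mat n n" "Y \<in> carrier_mat n n" "A \<in> carrier_mat n n" "Z \<in> carrier_mat n n"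
  shows "X * (Y * A * Z) = (X * Y) * A * Z"
proof -
  have YA: "Y * A \<in> carrier_mat n n" using assms by simp
  have XY: "X * Y \<in> carrier_mat n n" using assms by simp
  have "X * (Y * A * Z) = X * (Y * A) * Z" using assoc_mult_mat[OF assms(1) YA assms(4)] by simp
  also have "X * (Y * A) = X * Y * A" using assoc_mult_mat[OF assms(1) assms(2) assms(3)] by simp
  finally show ?thesis .
qed

lemma minus_zero_eq: assumes "X \<in> carrier_mat n n" "Y \<in> carrier_mat n n" "Y - X = 0\<^sub>m n n"
  shows "X = (Y :: complex mat)"
proof (rule eq_matI)
  fix i j assume "i < dim_row Y" "j < dim_col Y"
  hence i: "i < n" and j: "j < n" using assms by auto
  have "(Y - X) $$ (i,j) = 0" using assms(3) i j by simp
  hence "Y $$ (i,j) - X $$ (i,j) = 0" using assms(1,2) i j by simp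
  thus "X $$ (i,j) = Y $$ (i,j)" by simp
qed (use assms in auto)

lemma triple_carrier: "V \<in> carrier_mat n n \<Longrightarrow> D \<in> carrier_mat n n \<Longrightarrow> W \<in> carrier_mat n n
  \<Longrightarrow> V * D * W \<in> carrier_mat n n"
  by (meson mult_carrier_mat)

lemma mat_vec_zero: "V \<in> carrier_mat m n \<Longrightarrow> V *\<^sub>v 0\<^sub>v n = (0\<^sub>v m :: complex vec)"
  by (intro eq_vecI, auto simp: row_dot[of V m n])

lemma unit_back: assumes "unitary_mat n V" "k < n"
  shows "adj_mat V *\<^sub>v (V *\<^sub>v unit_vec n k) = unit_vec n k"
proof -
  have Vc: "V \<in> carrier_mat n n" using assms unitary_carrier by auto
  have "adj_mat V *\<^sub>v (V *\<^sub>v unit_vec n k) = (adj_mat V * V) *\<^sub>v unit_vec n k"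
    using Vc by (intro assoc_mult_mat_vec[of _ n n _ n, symmetric], auto)
  thus ?thesis using unitary_left[OF assms(1)] by simp
qed

lemma sum_unit: assumes "k < n"
  shows "(\<Sum>j<n. d j * (cmod (unit_vec n k $ j))^2) = d k"
proof -
  have "(\<Sum>j<n. d j * (cmod (unit_vec n k $ j))^2) = (\<Sum>j<n. if k = j then d j else 0)"
    by (intro sum.cong refl, auto simp: unit_vec_def)
  also have "\<dots> = d k" using assms by simp
  finally show ?thesis .
qed

lemma psd_decomp_iff: assumes V: "unitary_mat n V" and A: "A = V * dmat n (\<lambda>i. complex_of_real (d i)) * adj_mat V"
  shows "psd_mat n A \<longleftrightarrow> (\<forall>k<n. d k \<ge> 0)"
proof
  assume psd: "psd_mat n A"
  show "\<forall>k<n. d k \<ge> 0"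
  proof (intro allI impI)
    fix k assume k: "k < n"
    have Vc: "V \<in> carrier_mat n n" using V unitary_carrier by auto
    let ?v = "V *\<^sub>v unit_vec n k"
    have v: "?v \<in> carrier_vec n" using Vc mult_mat_vec_carrier[of V n n "unit_vec n k"] by simp
    have "ip ?v (A *\<^sub>v ?v) = complex_of_real (d k)"
      using form_decomp[OF V A v] unit_back[OF V k] sum_unit[OF k] by simp
    moreover have "Re (ip ?v (A *\<^sub>v ?v)) \<ge> 0" using psd v unfolding psd_mat_def ip_def by auto
    ultimately show "d k \<ge> 0" by simp
  qed
next
  assume d: "\<forall>k<n. d k \<ge> 0"
  have Vc: "V \<in> carrier_mat n n" using V unitary_carrier by auto
  have Ac: "A \<in> carrier_mat n n" unfolding A using Vc by (intro triple_carrier, auto)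
  have "Re (ip v (A *\<^sub>v v)) \<ge> 0" if v: "v \<in> carrier_vec n" for v
    using form_decomp[OF V A v] d by (auto intro!: sum_nonneg)
  thus "psd_mat n A" unfolding psd_mat_def ip_def[symmetric] using Ac herm_of_decomp[OF V A] by auto
qed

lemma psd_herm: "psd_mat n A \<Longrightarrow> A \<in> carrier_mat n n \<and> adj_mat A = A"
  by (simp add: psd_mat_def)

lemma psd_decomp: assumes "psd_mat n A"
  shows "\<exists>V d. unitary_mat n V \<and> A = V * dmat n (\<lambda>i. complex_of_real (d i)) * adj_mat V
     \<and> adj_mat V * A * V = dmat n (\<lambda>i. complex_of_real (d i)) \<and> (\<forall>k<n. d k \<ge> 0)"
proof -
  obtain V d where V: "unitary_mat n V" and A: "A = V * dmat n (\<lambda>i. complex_of_real (d i)) * adj_mat V"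
    and D: "adj_mat V * A * V = dmat n (\<lambda>i. complex_of_real (d i))"
    using spectral_form[of A n] psd_herm[OF assms] by blast
  show ?thesis using V A D psd_decomp_iff[OF V A] assms by blast
qed

lemma psd_form: assumes "psd_mat n P" "v \<in> carrier_vec n"
  shows "ip v (P *\<^sub>v v) = complex_of_real (Re (ip v (P *\<^sub>v v))) \<and> Re (ip v (P *\<^sub>v v)) \<ge> 0"
proof -
  obtain V d where V: "unitary_mat n V" and A: "P = V * dmat n (\<lambda>i. complex_of_real (d i)) * adj_mat V"
    and d: "\<forall>k<n. d k \<ge> 0" using psd_decomp[OF assms(1)] by blast
  show ?thesis using form_decomp[OF V A assms(2)] d by (auto intro!: sum_nonneg)
qed

lemma psd_zero_form: assumes "psd_mat n P" "v \<in> carrier_vec n" "ip v (P *\<^sub>v v) = 0"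
  shows "P *\<^sub>v v = 0\<^sub>v n"
proof -
  obtain V d where V: "unitary_mat n V" and A: "P = V * dmat n (\<lambda>i. complex_of_real (d i)) * adj_mat V"
    and d: "\<forall>k<n. d k \<ge> 0" using psd_decomp[OF assms(1)] by blast
  have Vc: "V \<in> carrier_mat n n" using V unitary_carrier by auto
  have aVc: "adj_mat V \<in> carrier_mat n n" using Vc by simp
  let ?D = "dmat n (\<lambda>i. complex_of_real (d i))"
  let ?y = "adj_mat V *\<^sub>v v"
  have y: "?y \<in> carrier_vec n" using aVc assms(2) mult_mat_vec_carrier[of "adj_mat V" n n v] by simp
  have "complex_of_real (\<Sum>k<n. d k * (cmod (?y $ k))^2) = 0"
    by (metis form_decomp[OF V A assms(2)] assms(3))
  hence "(\<Sum>k<n. d k * (cmod (?y $ k))^2) = 0" by (simp only: of_real_eq_0_iff)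
  hence z: "d k * (cmod (?y $ k))^2 = 0" if "k < n" for k
    using sum_nonneg_eq_0_iff[of "{..<n}" "\<lambda>k. d k * (cmod (?y $ k))^2"] d that by auto
  have Dy: "?D *\<^sub>v ?y = 0\<^sub>v n"
  proof (rule eq_vecI)
    fix k assume "k < dim_vec (0\<^sub>v n)" hence k: "k < n" by simp
    have "d k = 0 \<or> ?y $ k = 0" using z[OF k] by auto
    thus "(?D *\<^sub>v ?y) $ k = 0\<^sub>v n $ k" using k y by (auto simp: dmat_mult_vec)
  qed simp
  have "P *\<^sub>v v = (V * ?D) *\<^sub>v ?y"
    unfolding A using Vc assms(2) aVc by (intro assoc_mult_mat_vec[of _ n n _ n], auto)
  also have "\<dots> = V *\<^sub>v (?D *\<^sub>v ?y)"
    using Vc y by (intro assoc_mult_mat_vec[of _ n n _ n], auto)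
  also have "\<dots> = 0\<^sub>v n" unfolding Dy using Vc by (rule mat_vec_zero)
  finally show ?thesis .
qed

lemma ip_add_right: assumes "v \<in> carrier_vec n" "a \<in> carrier_vec n" "b \<in> carrier_vec n"
  shows "ip v (a + b) = ip v a + ip v b"
  using assms by (simp add: ip_expand[of _ n] sum.distrib algebra_simps)

lemma ip_zero_right: assumes "v \<in> carrier_vec n" shows "ip v (0\<^sub>v n) = 0"
  using assms by (simp add: ip_expand[of _ n])

lemma ip_unit: assumes "k < n" shows "ip (unit_vec n k) (unit_vec n k) = 1"
proof -
  have "(\<Sum>j<n. (cmod (unit_vec n k $ j))^2) = 1" using sum_unit[OF assms, of "\<lambda>_. 1"] by simp
  thus ?thesis by (simp only: ip_self[OF unit_vec_carrier] of_real_1)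
qed

lemma dmat_unit: assumes "k < n" shows "dmat n d *\<^sub>v unit_vec n k = d k \<cdot>\<^sub>v unit_vec n k"
  using assms by (intro eq_vecI, auto simp: dmat_mult_vec unit_vec_def)

lemma eigen_col: assumes V: "unitary_mat n V" and Mc: "M \<in> carrier_mat n n"
  and D: "adj_mat V * M * V = dmat n d" and k: "k < n"
  shows "M *\<^sub>v (V *\<^sub>v unit_vec n k) = d k \<cdot>\<^sub>v (V *\<^sub>v unit_vec n k)"
proof -
  have Vc: "V \<in> carrier_mat n n" using V unitary_carrier by auto
  have aVc: "adj_mat V \<in> carrier_mat n n" using Vc by simp
  have "V * dmat n d = (V * adj_mat V) * M * V" unfolding D[symmetric]
    by (rule assoc4[OF Vc aVc Mc Vc])
  also have "\<dots> = M * V" using unitary_right[OF V] Mc by simp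
  finally have MV: "M * V = V * dmat n d" by simp
  have "M *\<^sub>v (V *\<^sub>v unit_vec n k) = (M * V) *\<^sub>v unit_vec n k"
    using Vc Mc by (intro assoc_mult_mat_vec[of _ n n _ n, symmetric], auto)
  also have "\<dots> = V *\<^sub>v (dmat n d *\<^sub>v unit_vec n k)"
    unfolding MV using Vc by (intro assoc_mult_mat_vec[of _ n n _ n], auto)
  also have "\<dots> = d k \<cdot>\<^sub>v (V *\<^sub>v unit_vec n k)" unfolding dmat_unit[OF k] using Vc
    by (intro mult_mat_vec[of _ n n], auto)
  finally show ?thesis .
qed

lemma dmat_zero: "(\<forall>k<n. d k = 0) \<Longrightarrow> dmat n d = 0\<^sub>m n n"
  by (intro eq_matI, auto)

lemma psd_sqrt_unique: assumes P: "psd_mat n P" and Q: "psd_mat n Q" and PQ: "P * P = Q * Q"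
  shows "P = Q"
proof -
  have Pc: "P \<in> carrier_mat n n" and hP: "adj_mat P = P" using psd_herm[OF P] by auto
  have Qc: "Q \<in> carrier_mat n n" and hQ: "adj_mat Q = Q" using psd_herm[OF Q] by auto
  let ?M = "P - Q"
  have Mc: "?M \<in> carrier_mat n n" using Qc by (rule minus_carrier_mat)
  have hM: "adj_mat ?M = ?M" using Pc Qc hP hQ by (simp add: adj_minus)
  obtain V d where V: "unitary_mat n V" and Mf: "?M = V * dmat n (\<lambda>i. complex_of_real (d i)) * adj_mat V"
    and D: "adj_mat V * ?M * V = dmat n (\<lambda>i. complex_of_real (d i))"
    using spectral_form[OF Mc hM] by blast
  have Vc: "V \<in> carrier_mat n n" using V unitary_carrier by auto
  have dz: "d k = 0" if k: "k < n" for k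
  proof (rule ccontr)
    assume dk: "d k \<noteq> 0"
    let ?x = "V *\<^sub>v unit_vec n k"
    let ?d = "complex_of_real (d k)"
    have x: "?x \<in> carrier_vec n" using Vc mult_mat_vec_carrier[of V n n "unit_vec n k"] by simp
    have Mx: "?M *\<^sub>v ?x = ?d \<cdot>\<^sub>v ?x" using eigen_col[OF V Mc D k] .
    have xx: "ip ?x ?x = 1" using ip_unitary[OF V, of "unit_vec n k" "unit_vec n k"] ip_unit[OF k] by simp
    define a where "a = P *\<^sub>v ?x"
    define b where "b = Q *\<^sub>v ?x"
    have a: "a \<in> carrier_vec n" unfolding a_def using Pc x mult_mat_vec_carrier[of P n n] by simp
    have b: "b \<in> carrier_vec n" unfolding b_def using Qc x mult_mat_vec_carrier[of Q n n] by simp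
    have Mx2: "?M *\<^sub>v ?x = a - b" unfolding a_def b_def using Pc Qc x
      by (intro minus_mult_distrib_mat_vec, auto)
    have Pb: "P *\<^sub>v b \<in> carrier_vec n" using Pc b mult_mat_vec_carrier[of P n n] by simp
    have Pa: "P *\<^sub>v a \<in> carrier_vec n" using Pc a mult_mat_vec_carrier[of P n n] by simp
    have Qb: "Q *\<^sub>v b \<in> carrier_vec n" using Qc b mult_mat_vec_carrier[of Q n n] by simp
    have T1: "ip ?x (P *\<^sub>v (?M *\<^sub>v ?x)) = ?d * ip ?x a"
      unfolding Mx a_def using Pc x mult_mat_vec[of P n n ?x ?d]
        ip_smult_right[OF x, of "P *\<^sub>v ?x"] mult_mat_vec_carrier[of P n n ?x] by simp
    have "ip ?x (?M *\<^sub>v b) = ip (adj_mat ?M *\<^sub>v ?x) b" using Mc x b by (intro ip_adj[of _ n n], auto)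
    also have "\<dots> = cnj ?d * ip ?x b" unfolding hM Mx using x b by (rule ip_smult_left)
    finally have T2: "ip ?x (?M *\<^sub>v b) = ?d * ip ?x b" by simp
    have PMx: "P *\<^sub>v (?M *\<^sub>v ?x) = P *\<^sub>v a - P *\<^sub>v b" unfolding Mx2 using Pc a b
      by (intro mult_minus_distrib_mat_vec, auto)
    have MQx: "?M *\<^sub>v b = P *\<^sub>v b - Q *\<^sub>v b" using Pc Qc b by (intro minus_mult_distrib_mat_vec, auto)
    have Paa: "P *\<^sub>v a = (P * P) *\<^sub>v ?x" unfolding a_def using Pc x
      by (intro assoc_mult_mat_vec[of _ n n _ n, symmetric], auto)
    have Qbb: "Q *\<^sub>v b = (Q * Q) *\<^sub>v ?x" unfolding b_def using Qc x
      by (intro assoc_mult_mat_vec[of _ n n _ n, symmetric], auto)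
    have PQe: "P *\<^sub>v a = Q *\<^sub>v b" using Paa Qbb PQ by simp
    have sum0: "P *\<^sub>v (?M *\<^sub>v ?x) + ?M *\<^sub>v b = 0\<^sub>v n"
      unfolding PMx MQx PQe using Pa Pb Qb Pc Qc by (intro eq_vecI, auto)
    have "?d * ip ?x a + ?d * ip ?x b = 0"
      unfolding T1[symmetric] T2[symmetric]
      using ip_add_right[OF x, of "P *\<^sub>v (?M *\<^sub>v ?x)" "?M *\<^sub>v b"] sum0 ip_zero_right[OF x]
        Pc Mc x b mult_mat_vec_carrier[of P n n] mult_mat_vec_carrier[of ?M n n] by simp
    hence s0: "ip ?x a + ip ?x b = 0" using dk by (simp add: distrib_left[symmetric])
    have fa: "ip ?x a = complex_of_real (Re (ip ?x a)) \<and> Re (ip ?x a) \<ge> 0"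
      unfolding a_def using psd_form[OF P x] .
    have fb: "ip ?x b = complex_of_real (Re (ip ?x b)) \<and> Re (ip ?x b) \<ge> 0"
      unfolding b_def using psd_form[OF Q x] .
    have "Re (ip ?x a) + Re (ip ?x b) = 0" using arg_cong[OF s0, of Re] by simp
    hence "Re (ip ?x a) = 0" "Re (ip ?x b) = 0" using fa fb by auto
    hence "ip ?x a = 0" "ip ?x b = 0" using fa fb by auto
    hence "a = 0\<^sub>v n" "b = 0\<^sub>v n" unfolding a_def b_def using psd_zero_form[OF P x] psd_zero_form[OF Q x] by auto
    hence "?d \<cdot>\<^sub>v ?x = 0\<^sub>v n" using Mx Mx2 by simp
    hence "ip ?x (?d \<cdot>\<^sub>v ?x) = 0" using ip_zero_right[OF x] by simp
    hence "?d * ip ?x ?x = 0" using ip_smult_right[OF x x] by simp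
    thus False using xx dk by simp
  qed
  have "dmat n (\<lambda>i. complex_of_real (d i)) = 0\<^sub>m n n" using dz by (intro dmat_zero, auto)
  hence "?M = 0\<^sub>m n n" using Mf Vc by simp
  thus ?thesis using minus_zero_eq[OF Qc Pc] by simp
qed

lemma unitary_sandwich_sq: assumes V: "unitary_mat n V" and S: "S \<in> carrier_mat n n"
  shows "(V * S * adj_mat V) * (V * S * adj_mat V) = V * (S * S) * adj_mat V"
proof -
  have Vc: "V \<in> carrier_mat n n" using V unitary_carrier by auto
  have aVc: "adj_mat V \<in> carrier_mat n n" using Vc by simp
  have VS: "V * S \<in> carrier_mat n n" using Vc S by simp
  have "(V * S * adj_mat V) * (V * S * adj_mat V) = (V * S) * (adj_mat V * (V * S * adj_mat V))"
    using assoc_mult_mat[OF VS aVc, of "V * S * adj_mat V" n] triple_carrier[OF Vc S aVc] by simp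
  also have "adj_mat V * (V * S * adj_mat V) = (adj_mat V * V) * S * adj_mat V"
    by (rule assoc4[OF aVc Vc S aVc])
  also have "\<dots> = S * adj_mat V" using unitary_left[OF V] S by simp
  also have "(V * S) * (S * adj_mat V) = V * (S * S) * adj_mat V"
    using Vc S aVc by (simp add: assoc_mult_mat[of _ n n _ n _ n])
  finally show ?thesis .
qed

lemma psd_sqrt_exists: assumes "psd_mat n A" shows "\<exists>P. psd_mat n P \<and> P * P = A"
proof -
  obtain V d where V: "unitary_mat n V" and A: "A = V * dmat n (\<lambda>i. complex_of_real (d i)) * adj_mat V"
    and d: "\<forall>k<n. d k \<ge> 0" using psd_decomp[OF assms] by blast
  define P where "P = V * dmat n (\<lambda>i. complex_of_real (sqrt (d i))) * adj_mat V"
  have "psd_mat n P" using psd_decomp_iff[OF V P_def] d by simp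
  moreover have "P * P = A"
  proof -
    have "P * P = V * (dmat n (\<lambda>i. complex_of_real (sqrt (d i))) * dmat n (\<lambda>i. complex_of_real (sqrt (d i)))) * adj_mat V"
      unfolding P_def by (rule unitary_sandwich_sq[OF V], simp)
    also have "dmat n (\<lambda>i. complex_of_real (sqrt (d i))) * dmat n (\<lambda>i. complex_of_real (sqrt (d i)))
      = dmat n (\<lambda>i. complex_of_real (d i))"
      unfolding dmat_mult
    proof (intro eq_matI)
      fix i j assume "i < dim_row (dmat n (\<lambda>i. complex_of_real (d i)))" "j < dim_col (dmat n (\<lambda>i. complex_of_real (d i)))"
      hence i: "i < n" and j: "j < n" by auto
      have "\<forall>i<n. complex_of_real (sqrt (d i)) * complex_of_real (sqrt (d i)) = complex_of_real (d i)"
        using d by (simp flip: of_real_mult)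
      thus "dmat n (\<lambda>i. complex_of_real (sqrt (d i)) * complex_of_real (sqrt (d i))) $$ (i, j) =
         dmat n (\<lambda>i. complex_of_real (d i)) $$ (i, j)" using i j by simp
    qed auto
    finally show ?thesis using A by simp
  qed
  ultimately show ?thesis by blast
qed

lemma gram_psd: assumes Z: "Z \<in> carrier_mat n n" shows "psd_mat n (adj_mat Z * Z)"
proof -
  have c: "adj_mat Z * Z \<in> carrier_mat n n" using mult_carrier_mat[OF adj_mat_carrier[OF Z] Z] .
  have h: "adj_mat (adj_mat Z * Z) = adj_mat Z * Z" using Z by (simp add: adj_mult[of _ n n _ n])
  have "Re (ip v ((adj_mat Z * Z) *\<^sub>v v)) \<ge> 0" if v: "v \<in> carrier_vec n" for v
  proof -
    have Zv: "Z *\<^sub>v v \<in> carrier_vec n" using Z v mult_mat_vec_carrier[of Z n n] by simp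
    have "(adj_mat Z * Z) *\<^sub>v v = adj_mat Z *\<^sub>v (Z *\<^sub>v v)" using Z v
      by (intro assoc_mult_mat_vec[of _ n n _ n], auto)
    hence "ip v ((adj_mat Z * Z) *\<^sub>v v) = ip (Z *\<^sub>v v) (Z *\<^sub>v v)"
      using ip_adj[of "adj_mat Z" n n v "Z *\<^sub>v v"] Z v Zv by simp
    also have "\<dots> = complex_of_real (\<Sum>i<n. (cmod ((Z *\<^sub>v v) $ i))^2)" by (rule ip_self[OF Zv])
    finally show ?thesis by (simp add: sum_nonneg)
  qed
  thus ?thesis unfolding psd_mat_def ip_def[symmetric] using c h by auto
qed

lemma abs_mat_props: assumes Z: "Z \<in> carrier_mat n n"
  shows "psd_mat n (abs_mat Z) \<and> abs_mat Z * abs_mat Z = adj_mat Z * Z"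
proof -
  obtain P0 where P0: "psd_mat n P0 \<and> P0 * P0 = adj_mat Z * Z"
    using psd_sqrt_exists[OF gram_psd[OF Z]] by blast
  have ex: "\<exists>!P. psd_mat n P \<and> P * P = adj_mat Z * Z"
  proof (rule ex1I[of _ P0])
    fix Q assume "psd_mat n Q \<and> Q * Q = adj_mat Z * Z"
    thus "Q = P0" using P0 psd_sqrt_unique[of n Q P0] by simp
  qed (rule P0)
  have "dim_col Z = n" using Z by simp
  thus ?thesis unfolding abs_mat_def using theI'[OF ex] by simp
qed

lemma det_dmat: "det (dmat n d) = (\<Prod>k<n. d k)"
proof -
  have "upper_triangular (dmat n d)" by (auto simp: upper_triangular_def)
  hence "det (dmat n d) = prod_list (diag_mat (dmat n d))" by (intro det_upper_triangular[of _ n], auto)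
  also have "\<dots> = (\<Prod>k<n. d k)" unfolding prod_list_diag_prod by (simp add: atLeast0LessThan)
  finally show ?thesis .
qed

lemma det_sandwich: assumes V: "unitary_mat n V" and D: "D \<in> carrier_mat n n"
  shows "det (V * D * adj_mat V) = det D"
proof -
  have Vc: "V \<in> carrier_mat n n" using V unitary_carrier by auto
  have "det (V * D * adj_mat V) = det V * det D * cnj (det V)"
    using Vc D by (simp add: det_mult[of _ n] det_adj)
  also have "\<dots> = det D * (cnj (det V) * det V)" by simp
  also have "cnj (det V) * det V = 1" using cnj_mult_self[of "det V"] unitary_det[OF V] by simp
  finally show ?thesis by simp
qed

lemma det_sandwich': assumes V: "unitary_mat n V" and D: "D \<in> carrier_mat n n"
  shows "det (adj_mat V * D * V) = det D"
  using det_sandwich[OF unitary_adj[OF V] D] by simp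

lemma smult_one_mat_vec: assumes "x \<in> carrier_vec n"
  shows "(c \<cdot>\<^sub>m 1\<^sub>m n) *\<^sub>v x = c \<cdot>\<^sub>v (x :: complex vec)"
proof (rule eq_vecI)
  fix i assume "i < dim_vec (c \<cdot>\<^sub>v x)" hence i: "i < n" using assms by simp
  have "((c \<cdot>\<^sub>m 1\<^sub>m n) *\<^sub>v x) $ i = (\<Sum>k<n. (c \<cdot>\<^sub>m 1\<^sub>m n) $$ (i,k) * x $ k)"
    using assms i by (intro mat_vec_expand, auto)
  also have "\<dots> = (\<Sum>k<n. if i = k then c * x $ k else 0)" using i by (intro sum.cong refl, auto)
  also have "\<dots> = c * x $ i" using i by simp
  finally show "((c \<cdot>\<^sub>m 1\<^sub>m n) *\<^sub>v x) $ i = (c \<cdot>\<^sub>v x) $ i" using i assms by simp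
qed (use assms in simp)

definition colupd :: "nat \<Rightarrow> nat \<Rightarrow> complex vec \<Rightarrow> complex mat" where
  "colupd n k u = mat n n (\<lambda>(i,j). if j = k then u $ i else 0)"

lemma colupd_carrier[simp]: "colupd n k u \<in> carrier_mat n n" by (simp add: colupd_def)

lemma col_update: assumes M: "M \<in> carrier_mat n n" and x: "x \<in> carrier_vec n" and k: "k < n"
  shows "det (M + colupd n k (M *\<^sub>v x)) = det M * (1 + x $ k)"
proof -
  let ?u = "M *\<^sub>v x"
  let ?M' = "M + colupd n k ?u"
  have M'c: "?M' \<in> carrier_mat n n" using M by simp
  have u: "?u \<in> carrier_vec n" using M x mult_mat_vec_carrier[of M n n x] by simp
  have del: "mat_delete ?M' i k = mat_delete M i k" if i: "i < n" for i
    using M i k by (intro eq_matI, auto simp: mat_delete_def colupd_def)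
  have "det ?M' = (\<Sum>i<n. ?M' $$ (i,k) * cofactor ?M' i k)"
    by (rule laplace_expansion_column[OF M'c k])
  also have "\<dots> = (\<Sum>i<n. M $$ (i,k) * cofactor M i k + ?u $ i * cofactor M i k)"
  proof (intro sum.cong refl)
    fix i assume "i \<in> {..<n}" hence i: "i < n" by simp
    have cof: "cofactor ?M' i k = cofactor M i k" unfolding cofactor_def del[OF i] ..
    have "?M' $$ (i,k) = M $$ (i,k) + ?u $ i" using M i k by (simp add: colupd_def)
    thus "?M' $$ (i,k) * cofactor ?M' i k = M $$ (i,k) * cofactor M i k + ?u $ i * cofactor M i k"
      unfolding cof by (simp add: algebra_simps)
  qed
  also have "\<dots> = det M + (\<Sum>i<n. ?u $ i * cofactor M i k)"
    by (simp add: sum.distrib laplace_expansion_column[OF M k])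
  also have "(\<Sum>i<n. ?u $ i * cofactor M i k) = (Determinant.adj_mat M *\<^sub>v ?u) $ k"
  proof -
    have aM: "Determinant.adj_mat M \<in> carrier_mat n n" using Determinant.adj_mat(1)[OF M] .
    have "(Determinant.adj_mat M *\<^sub>v ?u) $ k = (\<Sum>i<n. Determinant.adj_mat M $$ (k,i) * ?u $ i)"
      using aM u k by (intro mat_vec_expand, auto)
    also have "\<dots> = (\<Sum>i<n. ?u $ i * cofactor M i k)"
      using M k by (intro sum.cong refl, auto simp: Determinant.adj_mat_def mult.commute)
    finally show ?thesis by simp
  qed
  also have "Determinant.adj_mat M *\<^sub>v ?u = (Determinant.adj_mat M * M) *\<^sub>v x"
    using Determinant.adj_mat(1)[OF M] M x by (intro assoc_mult_mat_vec[symmetric, of _ n n _ n], auto)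
  also have "\<dots> = det M \<cdot>\<^sub>v x" unfolding Determinant.adj_mat(3)[OF M] by (rule smult_one_mat_vec[OF x])
  finally show ?thesis using x k by (simp add: algebra_simps)
qed

lemma solve_lin: assumes M: "(M :: complex mat) \<in> carrier_mat n n" and d: "det M \<noteq> 0" and u: "u \<in> carrier_vec n"
  shows "\<exists>x \<in> carrier_vec n. M *\<^sub>v x = u"
proof -
  define x where "x = (1 / det M) \<cdot>\<^sub>v (Determinant.adj_mat M *\<^sub>v u)"
  have aM: "Determinant.adj_mat M \<in> carrier_mat n n" using Determinant.adj_mat(1)[OF M] .
  have au: "Determinant.adj_mat M *\<^sub>v u \<in> carrier_vec n" using aM u mult_mat_vec_carrier[of _ n n u] by simp
  have x: "x \<in> carrier_vec n" unfolding x_def using au by simp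
  have "M *\<^sub>v x = (1 / det M) \<cdot>\<^sub>v (M *\<^sub>v (Determinant.adj_mat M *\<^sub>v u))"
    unfolding x_def using M au by (intro mult_mat_vec[of _ n n], auto)
  also have "M *\<^sub>v (Determinant.adj_mat M *\<^sub>v u) = (M * Determinant.adj_mat M) *\<^sub>v u"
    using M aM u by (intro assoc_mult_mat_vec[symmetric, of _ n n _ n], auto)
  also have "\<dots> = det M \<cdot>\<^sub>v u" unfolding Determinant.adj_mat(2)[OF M] by (rule smult_one_mat_vec[OF u])
  finally have "M *\<^sub>v x = u" using d u by (simp add: smult_smult_assoc)
  thus ?thesis using x by blast
qed

definition pd_mat :: "nat \<Rightarrow> complex mat \<Rightarrow> bool" where
  "pd_mat n X \<longleftrightarrow> X \<in> carrier_mat n n \<and> adj_mat X = X \<and>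
     (\<forall>v \<in> carrier_vec n. v \<noteq> 0\<^sub>v n \<longrightarrow> Re (ip v (X *\<^sub>v v)) > 0)"

lemma herm_form_real: assumes "X \<in> carrier_mat n n" "adj_mat X = X" "v \<in> carrier_vec n"
  shows "ip v (X *\<^sub>v v) = complex_of_real (Re (ip v (X *\<^sub>v v)))"
proof -
  obtain V d where V: "unitary_mat n V" and A: "X = V * dmat n (\<lambda>i. complex_of_real (d i)) * adj_mat V"
    using spectral_form[OF assms(1,2)] by blast
  show ?thesis using form_decomp[OF V A assms(3)] by simp
qed

lemma unitary_col_form: assumes V: "unitary_mat n V" and A: "A = V * dmat n (\<lambda>i. complex_of_real (d i)) * adj_mat V"
  and k: "k < n"
  shows "ip (V *\<^sub>v unit_vec n k) (A *\<^sub>v (V *\<^sub>v unit_vec n k)) = complex_of_real (d k)"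
proof -
  have Vc: "V \<in> carrier_mat n n" using V unitary_carrier by auto
  have v: "V *\<^sub>v unit_vec n k \<in> carrier_vec n" using Vc mult_mat_vec_carrier[of V n n "unit_vec n k"] by simp
  show ?thesis using form_decomp[OF V A v] unit_back[OF V k] sum_unit[OF k] by simp
qed

lemma unitary_col_nonzero: assumes V: "unitary_mat n V" and k: "k < n"
  shows "V *\<^sub>v unit_vec n k \<noteq> 0\<^sub>v n"
proof
  assume z: "V *\<^sub>v unit_vec n k = 0\<^sub>v n"
  have "ip (V *\<^sub>v unit_vec n k) (V *\<^sub>v unit_vec n k) = 1"
    using ip_unitary[OF V, of "unit_vec n k" "unit_vec n k"] ip_unit[OF k] by simp
  thus False unfolding z using ip_zero_right[of "0\<^sub>v n" n] by simp
qed

lemma pd_det: assumes "pd_mat n X" shows "\<exists>r>0. det X = complex_of_real r"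
proof -
  have Xc: "X \<in> carrier_mat n n" and hX: "adj_mat X = X" using assms unfolding pd_mat_def by auto
  obtain V d where V: "unitary_mat n V" and A: "X = V * dmat n (\<lambda>i. complex_of_real (d i)) * adj_mat V"
    using spectral_form[OF Xc hX] by blast
  have Vc: "V \<in> carrier_mat n n" using V unitary_carrier by auto
  have dpos: "d k > 0" if k: "k < n" for k
  proof -
    have v: "V *\<^sub>v unit_vec n k \<in> carrier_vec n" using Vc mult_mat_vec_carrier[of V n n "unit_vec n k"] by simp
    have "Re (ip (V *\<^sub>v unit_vec n k) (X *\<^sub>v (V *\<^sub>v unit_vec n k))) > 0"
      using assms v unitary_col_nonzero[OF V k] unfolding pd_mat_def by blast
    thus ?thesis using unitary_col_form[OF V A k] by simp
  qed
  have "det X = det (dmat n (\<lambda>i. complex_of_real (d i)))" unfolding A by (rule det_sandwich[OF V], simp)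
  also have "\<dots> = complex_of_real (\<Prod>k<n. d k)" by (simp add: det_dmat)
  finally show ?thesis using dpos by (intro exI[of _ "\<Prod>k<n. d k"], auto intro!: prod_pos)
qed

lemma ip_unit_left: assumes "x \<in> carrier_vec n" "k < n" shows "ip (unit_vec n k) x = x $ k"
proof -
  have "ip (unit_vec n k) x = (\<Sum>i<n. cnj (unit_vec n k $ i) * x $ i)" using assms by (intro ip_expand, auto)
  also have "\<dots> = (\<Sum>i<n. if k = i then x $ i else 0)" by (intro sum.cong refl, auto simp: unit_vec_def)
  finally show ?thesis using assms by simp
qed

lemma pd_diag_entry: assumes B: "pd_mat n B" and k: "k < n" and x: "x \<in> carrier_vec n"
  and Bx: "B *\<^sub>v x = unit_vec n k"
  shows "Re (x $ k) > 0 \<and> x $ k = complex_of_real (Re (x $ k))"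
proof -
  have Bc: "B \<in> carrier_mat n n" and hB: "adj_mat B = B" using B unfolding pd_mat_def by auto
  have x0: "x \<noteq> 0\<^sub>v n"
  proof
    assume xz: "x = 0\<^sub>v n"
    have "B *\<^sub>v x = 0\<^sub>v n" unfolding xz by (rule mat_vec_zero[OF Bc])
    hence "(unit_vec n k :: complex vec) $ k = 0\<^sub>v n $ k" using Bx by simp
    thus False using k by simp
  qed
  have "ip x (B *\<^sub>v x) = ip (adj_mat B *\<^sub>v x) x" using Bc x by (intro ip_adj[of _ n n], auto)
  also have "\<dots> = x $ k" unfolding hB Bx using ip_unit_left[OF x k] .
  finally have e: "ip x (B *\<^sub>v x) = x $ k" .
  have "Re (ip x (B *\<^sub>v x)) > 0" using B x x0 unfolding pd_mat_def by blast
  thus ?thesis using herm_form_real[OF Bc hB x] e by simp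
qed

lemma dmat_add: "dmat n a + dmat n b = dmat n (\<lambda>i. a i + b i)"
  by (intro eq_matI, auto)

lemma colupd_dmat: assumes k: "k < n"
  shows "colupd n k (c \<cdot>\<^sub>v unit_vec n k) = dmat n (\<lambda>i. if i = k then c else 0)"
  using k by (intro eq_matI, auto simp: colupd_def unit_vec_def)

lemma pd_plus_psd_dmat: assumes B: "pd_mat n B" and c: "\<forall>k<n. c k \<ge> 0"
  shows "pd_mat n (B + dmat n (\<lambda>i. complex_of_real (c i)))"
proof -
  have Bc: "B \<in> carrier_mat n n" and hB: "adj_mat B = B" using B unfolding pd_mat_def by auto
  let ?D = "dmat n (\<lambda>i. complex_of_real (c i))"
  have "Re (ip v ((B + ?D) *\<^sub>v v)) > 0" if v: "v \<in> carrier_vec n" and v0: "v \<noteq> 0\<^sub>v n" for v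
  proof -
    have "(B + ?D) *\<^sub>v v = B *\<^sub>v v + ?D *\<^sub>v v" using Bc v by (intro add_mult_distrib_mat_vec, auto)
    hence "ip v ((B + ?D) *\<^sub>v v) = ip v (B *\<^sub>v v) + ip v (?D *\<^sub>v v)"
      using ip_add_right[OF v, of "B *\<^sub>v v" "?D *\<^sub>v v"] Bc v mult_mat_vec_carrier[of B n n v]
        mult_mat_vec_carrier[of ?D n n v] by simp
    moreover have "Re (ip v (B *\<^sub>v v)) > 0" using B v v0 unfolding pd_mat_def by blast
    moreover have "Re (ip v (?D *\<^sub>v v)) \<ge> 0" using ip_dmat[OF v, of c] c by (auto intro!: sum_nonneg)
    ultimately show ?thesis by simp
  qed
  moreover have "adj_mat (B + ?D) = B + ?D" using Bc hB by (simp add: adj_add[of _ n n] adj_dmat_real)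
  ultimately show ?thesis unfolding pd_mat_def using Bc by auto
qed

lemma det_mono_diag: assumes B: "pd_mat n B" and c: "\<forall>k<n. c k \<ge> 0"
  shows "j \<le> n \<Longrightarrow> (\<exists>r. det (B + dmat n (\<lambda>i. complex_of_real (if i < j then c i else 0))) = complex_of_real r
      \<and> r \<ge> Re (det B) \<and> (r = Re (det B) \<longrightarrow> (\<forall>k<j. c k = 0)))"
proof (induction j)
  case 0
  have "dmat n (\<lambda>i. complex_of_real (if i < 0 then c i else 0)) = 0\<^sub>m n n" by (intro eq_matI, auto)
  moreover have Bc: "B \<in> carrier_mat n n" using B unfolding pd_mat_def by auto
  moreover obtain r where "det B = complex_of_real r" using pd_det[OF B] by auto
  ultimately show ?case by (intro exI[of _ r], simp)
next
  case (Suc j)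
  hence j: "j < n" by simp
  from Suc.IH j obtain r where r: "det (B + dmat n (\<lambda>i. complex_of_real (if i < j then c i else 0))) = complex_of_real r"
    and rge: "r \<ge> Re (det B)" and req: "r = Re (det B) \<longrightarrow> (\<forall>k<j. c k = 0)" by auto
  let ?cj = "\<lambda>i. if i < j then c i else 0"
  let ?B' = "B + dmat n (\<lambda>i. complex_of_real (?cj i))"
  have Bc: "B \<in> carrier_mat n n" using B unfolding pd_mat_def by auto
  have B'c: "?B' \<in> carrier_mat n n" using Bc by simp
  have pdB': "pd_mat n ?B'" using pd_plus_psd_dmat[OF B, of ?cj] c by simp
  obtain r0 where r0: "r0 > 0" "det B = complex_of_real r0" using pd_det[OF B] by auto
  obtain r' where r': "r' > 0" "det ?B' = complex_of_real r'" using pd_det[OF pdB'] by auto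
  have "r = r'" using r r' by simp
  obtain x where x: "x \<in> carrier_vec n" and Bx: "?B' *\<^sub>v x = unit_vec n j"
    using solve_lin[OF B'c _ unit_vec_carrier, of j] r' by auto
  have xj: "Re (x $ j) > 0 \<and> x $ j = complex_of_real (Re (x $ j))" by (rule pd_diag_entry[OF pdB' j x Bx])
  let ?c = "complex_of_real (c j)"
  have cx: "?B' *\<^sub>v (?c \<cdot>\<^sub>v x) = ?c \<cdot>\<^sub>v unit_vec n j" unfolding Bx[symmetric] using B'c x
    by (intro mult_mat_vec[of _ n n], auto)
  have "det (?B' + colupd n j (?B' *\<^sub>v (?c \<cdot>\<^sub>v x))) = det ?B' * (1 + (?c \<cdot>\<^sub>v x) $ j)"
    using x j by (intro col_update[OF B'c], auto)
  also have "?B' + colupd n j (?B' *\<^sub>v (?c \<cdot>\<^sub>v x)) = B + dmat n (\<lambda>i. complex_of_real (if i < Suc j then c i else 0))"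
    unfolding cx colupd_dmat[OF j] using Bc by (auto simp: assoc_add_mat[of _ n n] dmat_add intro!: arg_cong[of _ _ "\<lambda>f. B + dmat n f"])
  finally have eq: "det (B + dmat n (\<lambda>i. complex_of_real (if i < Suc j then c i else 0)))
     = complex_of_real (r' * (1 + c j * Re (x $ j)))" using r'(2) x j xj by (simp add: of_real_mult)
  have cj: "c j \<ge> 0" using c j by simp
  have ge: "r' * (1 + c j * Re (x $ j)) \<ge> r'" using r'(1) cj xj by (simp add: algebra_simps)
  show ?case
  proof (intro exI[of _ "r' * (1 + c j * Re (x $ j))"] conjI impI)
    show "det (B + dmat n (\<lambda>i. complex_of_real (if i < Suc j then c i else 0))) = complex_of_real (r' * (1 + c j * Re (x $ j)))"
      by (rule eq)
    show "r' * (1 + c j * Re (x $ j)) \<ge> Re (det B)" using ge rge \<open>r = r'\<close> by simp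
    assume e: "r' * (1 + c j * Re (x $ j)) = Re (det B)"
    hence "r' = Re (det B)" using ge rge \<open>r = r'\<close> by simp
    hence "c j * Re (x $ j) = 0" using e r'(1) by (simp add: algebra_simps)
    hence c0: "c j = 0" using xj by simp
    have "\<forall>k<j. c k = 0" using req \<open>r' = Re (det B)\<close> \<open>r = r'\<close> by simp
    thus "\<forall>k<Suc j. c k = 0" using c0 less_Suc_eq by auto
  qed
qed

lemma unitary_congr_pd: assumes V: "unitary_mat n V" and X: "pd_mat n X"
  shows "pd_mat n (adj_mat V * X * V)"
proof -
  have Vc: "V \<in> carrier_mat n n" using V unitary_carrier by auto
  have aVc: "adj_mat V \<in> carrier_mat n n" using Vc by simp
  have Xc: "X \<in> carrier_mat n n" and hX: "adj_mat X = X" using X unfolding pd_mat_def by auto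
  let ?B = "adj_mat V * X * V"
  have Bc: "?B \<in> carrier_mat n n" using triple_carrier[OF aVc Xc Vc] .
  have "adj_mat ?B = adj_mat V * adj_mat (adj_mat V * X)"
    using aVc Xc Vc by (intro adj_mult[of _ n n _ n], auto)
  also have "adj_mat (adj_mat V * X) = adj_mat X * V" using aVc Xc by (simp add: adj_mult[of _ n n _ n])
  finally have hB: "adj_mat ?B = ?B" unfolding hX using aVc Xc Vc by (simp add: assoc_mult_mat[of _ n n _ n _ n])
  have "Re (ip v (?B *\<^sub>v v)) > 0" if v: "v \<in> carrier_vec n" and v0: "v \<noteq> 0\<^sub>v n" for v
  proof -
    have Vv: "V *\<^sub>v v \<in> carrier_vec n" using Vc v mult_mat_vec_carrier[of V n n v] by simp
    have XVv: "X *\<^sub>v (V *\<^sub>v v) \<in> carrier_vec n" using Xc Vv mult_mat_vec_carrier[of X n n] by simp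
    have "?B *\<^sub>v v = (adj_mat V * X) *\<^sub>v (V *\<^sub>v v)" using aVc Xc Vc v by (intro assoc_mult_mat_vec[of _ n n _ n], auto)
    also have "\<dots> = adj_mat V *\<^sub>v (X *\<^sub>v (V *\<^sub>v v))" using aVc Xc Vv by (intro assoc_mult_mat_vec[of _ n n _ n], auto)
    finally have "ip v (?B *\<^sub>v v) = ip v (adj_mat V *\<^sub>v (X *\<^sub>v (V *\<^sub>v v)))" by simp
    also have "\<dots> = ip (V *\<^sub>v v) (X *\<^sub>v (V *\<^sub>v v))" using ip_adj[OF aVc v XVv] by simp
    finally have e: "ip v (?B *\<^sub>v v) = ip (V *\<^sub>v v) (X *\<^sub>v (V *\<^sub>v v))" .
    have "V *\<^sub>v v \<noteq> 0\<^sub>v n"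
    proof
      assume z: "V *\<^sub>v v = 0\<^sub>v n"
      have "ip (V *\<^sub>v v) (V *\<^sub>v v) = ip v v" by (rule ip_unitary[OF V v v])
      hence "ip v v = 0" unfolding z using ip_zero_right[of "0\<^sub>v n" n] by simp
      hence "complex_of_real (\<Sum>i<n. (cmod (v $ i))^2) = 0" by (metis ip_self[OF v])
      hence "(\<Sum>i<n. (cmod (v $ i))^2) = 0" by (simp only: of_real_eq_0_iff)
      thus False using sum_sq_zero[OF v] v0 by simp
    qed
    thus ?thesis unfolding e using X Vv unfolding pd_mat_def by blast
  qed
  thus ?thesis unfolding pd_mat_def using Bc hB by auto
qed

lemma det_mono: assumes X: "pd_mat n X" and Yc: "Y \<in> carrier_mat n n" and D: "psd_mat n (Y - X)"
  shows "\<exists>rx ry. det X = complex_of_real rx \<and> det Y = complex_of_real ry \<and> 0 < rx \<and> rx \<le> ry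
     \<and> (rx = ry \<longrightarrow> X = Y)"
proof -
  have Xc: "X \<in> carrier_mat n n" and hX: "adj_mat X = X" using X unfolding pd_mat_def by auto
  obtain V c where V: "unitary_mat n V" and Df: "Y - X = V * dmat n (\<lambda>i. complex_of_real (c i)) * adj_mat V"
    and Dd: "adj_mat V * (Y - X) * V = dmat n (\<lambda>i. complex_of_real (c i))" and c: "\<forall>k<n. c k \<ge> 0"
    using psd_decomp[OF D] by blast
  have Vc: "V \<in> carrier_mat n n" using V unitary_carrier by auto
  have aVc: "adj_mat V \<in> carrier_mat n n" using Vc by simp
  let ?B = "adj_mat V * X * V"
  let ?C = "dmat n (\<lambda>i. complex_of_real (c i))"
  have pdB: "pd_mat n ?B" by (rule unitary_congr_pd[OF V X])
  have YXD: "Y = X + (Y - X)"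
  proof (rule eq_matI)
    fix i j assume "i < dim_row (X + (Y - X))" "j < dim_col (X + (Y - X))"
    hence i: "i < n" and j: "j < n" using Xc by auto
    show "Y $$ (i,j) = (X + (Y - X)) $$ (i,j)" using Xc Yc i j by simp
  qed (use Xc Yc in auto)
  have DC: "Y - X \<in> carrier_mat n n" using Xc by (rule minus_carrier_mat)
  have "adj_mat V * Y * V = adj_mat V * (X + (Y - X)) * V" by (simp only: YXD[symmetric])
  also have "adj_mat V * (X + (Y - X)) = adj_mat V * X + adj_mat V * (Y - X)"
    using aVc Xc DC by (rule mult_add_distrib_mat)
  also have "(adj_mat V * X + adj_mat V * (Y - X)) * V = ?B + adj_mat V * (Y - X) * V"
  proof -
    have c1: "adj_mat V * X \<in> carrier_mat n n" using aVc Xc by simp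
    have c2: "adj_mat V * (Y - X) \<in> carrier_mat n n" using aVc DC by simp
    show ?thesis by (rule add_mult_distrib_mat[OF c1 c2 Vc])
  qed
  finally have YB: "adj_mat V * Y * V = ?B + ?C" unfolding Dd .
  have dY: "det Y = det (?B + ?C)" unfolding YB[symmetric] by (rule det_sandwich'[OF V Yc, symmetric])
  have dX: "det X = det ?B" by (rule det_sandwich'[OF V Xc, symmetric])
  have ce: "dmat n (\<lambda>i. complex_of_real (if i < n then c i else 0)) = ?C" by (intro eq_matI, auto)
  have "\<exists>r. det (?B + ?C) = complex_of_real r \<and> r \<ge> Re (det ?B) \<and> (r = Re (det ?B) \<longrightarrow> (\<forall>k<n. c k = 0))"
    using det_mono_diag[OF pdB c, of n] unfolding ce by simp
  then obtain r where r: "det (?B + ?C) = complex_of_real r" and rge: "r \<ge> Re (det ?B)"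
    and req: "r = Re (det ?B) \<longrightarrow> (\<forall>k<n. c k = 0)" by blast
  obtain rx where rx: "rx > 0" "det ?B = complex_of_real rx" using pd_det[OF pdB] by auto
  show ?thesis
  proof (rule exI[of _ rx], rule exI[of _ r], intro conjI impI)
    show "det X = complex_of_real rx" using dX rx by simp
    show "det Y = complex_of_real r" using dY r by simp
    show "0 < rx" by fact
    show "rx \<le> r" using rge rx by simp
    assume "rx = r"
    hence "\<forall>k<n. c k = 0" using req rx by simp
    hence "?C = 0\<^sub>m n n" by (intro dmat_zero, auto)
    hence "Y - X = 0\<^sub>m n n" unfolding Df using Vc by simp
    thus "X = Y" using minus_zero_eq[OF Xc Yc] by simp
  qed
qed

lemma mult_dmat_index: assumes "C \<in> carrier_mat n n" "a < n" "b < n"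
  shows "(C * dmat n d) $$ (a,b) = C $$ (a,b) * d b"
proof -
  have "(C * dmat n d) $$ (a,b) = (\<Sum>k<n. C $$ (a,k) * dmat n d $$ (k,b))"
    using assms by (simp add: row_dot[of C n n])
  also have "\<dots> = (\<Sum>k<n. if k = b then C $$ (a,k) * d b else 0)"
    using assms by (intro sum.cong refl, auto)
  finally show ?thesis using assms by simp
qed

lemma cmod_one_minus: assumes "0 \<le> s" "cmod x \<le> 1"
  shows "cmod (1 - complex_of_real s * x) \<ge> 1 - s"
proof -
  have "Re x \<le> 1" using complex_Re_le_cmod[of x] assms by linarith
  hence "1 - s \<le> 1 - s * Re x" using assms by (simp add: mult_left_le)
  also have "1 - s * Re x = Re (1 - complex_of_real s * x)" by simp
  also have "\<dots> \<le> cmod (1 - complex_of_real s * x)" by (rule complex_Re_le_cmod)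
  finally show ?thesis .
qed

lemma cmod_one_minus_eq: assumes "0 < s" "cmod x \<le> 1" "cmod (1 - complex_of_real s * x) = 1 - s"
  shows "x = 1"
proof -
  have "Re (1 - complex_of_real s * x) \<le> 1 - s" using complex_Re_le_cmod[of "1 - complex_of_real s * x"] assms(3) by simp
  hence "s * Re x \<ge> s" by simp
  hence r1: "Re x \<ge> 1" using assms(1) by simp
  have "Re x \<le> 1" using complex_Re_le_cmod[of x] assms by linarith
  hence re: "Re x = 1" using r1 by simp
  have "(cmod x)^2 = (Re x)^2 + (Im x)^2" by (simp add: cmod_power2)
  moreover have "(cmod x)^2 \<le> 1" using assms(2) norm_ge_zero[of x] by (simp add: power_le_one)
  ultimately have "(Im x)^2 \<le> 0" using re by simp
  hence "Im x = 0" by simp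
  thus ?thesis using re by (simp add: complex_eq_iff)
qed

lemma prod_trunc: assumes "j \<le> n"
  shows "(\<Prod>k<n. f (if k < j then s k else 0)) = (\<Prod>k<j. f (s k)) * f 0 ^ (n - j)"
proof -
  have U: "{..<n} = {..<j} \<union> {j..<n}" using assms by auto
  have "(\<Prod>k<n. f (if k < j then s k else 0)) = (\<Prod>k<j. f (if k < j then s k else 0)) * (\<Prod>k\<in>{j..<n}. f (if k < j then s k else 0))"
    unfolding U by (rule prod.union_disjoint, auto)
  also have "(\<Prod>k<j. f (if k < j then s k else 0)) = (\<Prod>k<j. f (s k))" by (intro prod.cong refl, auto)
  also have "(\<Prod>k\<in>{j..<n}. f (if k < j then s k else 0)) = (\<Prod>k\<in>{j..<n}. f 0)" by (intro prod.cong refl, auto)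
  finally show ?thesis by simp
qed

lemma prod_eq_min: fixes a b A B :: real
  assumes "0 < A" "A \<le> a" "0 < B" "B \<le> b" "a * b = A * B"
  shows "a = A \<and> b = B"
proof -
  have "a * b \<ge> a * B" using assms by (intro mult_left_mono, auto)
  moreover have "a * B \<ge> A * B" using assms by (intro mult_right_mono, auto)
  ultimately have "a * B = A * B" using assms(5) by simp
  hence aA: "a = A" using assms(3) by simp
  hence "b = B" using assms(1,5) by simp
  thus ?thesis using aA by simp
qed

lemma lemG_ind: assumes C: "unitary_mat n C" and s: "\<forall>k<n. 0 \<le> s k \<and> s k < 1"
  shows "j \<le> n \<Longrightarrow>
    cmod (det (1\<^sub>m n - C * dmat n (\<lambda>k. complex_of_real (if k < j then s k else 0)))) \<ge> (\<Prod>k<j. 1 - s k) \<and>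
    (cmod (det (1\<^sub>m n - C * dmat n (\<lambda>k. complex_of_real (if k < j then s k else 0)))) = (\<Prod>k<j. 1 - s k)
      \<longrightarrow> (\<forall>k<j. s k > 0 \<longrightarrow> C *\<^sub>v unit_vec n k = unit_vec n k))"
proof (induction j)
  case 0
  have Cc: "C \<in> carrier_mat n n" using C unitary_carrier by auto
  have "dmat n (\<lambda>k. complex_of_real (if k < 0 then s k else 0)) = 0\<^sub>m n n" by (intro eq_matI, auto)
  moreover have "1\<^sub>m n - 0\<^sub>m n n = (1\<^sub>m n :: complex mat)" by (intro eq_matI, auto)
  ultimately have "1\<^sub>m n - C * dmat n (\<lambda>k. complex_of_real (if k < 0 then s k else 0)) = 1\<^sub>m n" using Cc by simp
  thus ?case by simp
next
  case (Suc j)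
  hence j: "j < n" by simp
  have Cc: "C \<in> carrier_mat n n" using C unitary_carrier by auto
  let ?sj = "\<lambda>k. if k < j then s k else 0"
  let ?Dj = "dmat n (\<lambda>k. complex_of_real (?sj k))"
  let ?M = "1\<^sub>m n - C * ?Dj"
  let ?A = "\<Prod>k<j. 1 - s k"
  have Mc: "?M \<in> carrier_mat n n" using mult_carrier_mat[OF Cc dmat_carrier] by (rule minus_carrier_mat)
  from Suc.IH j have IH1: "cmod (det ?M) \<ge> ?A"
    and IH2: "cmod (det ?M) = ?A \<longrightarrow> (\<forall>k<j. s k > 0 \<longrightarrow> C *\<^sub>v unit_vec n k = unit_vec n k)" by auto
  have Apos: "?A > 0" using s j by (intro prod_pos, auto)
  have detM: "det ?M \<noteq> 0" using IH1 Apos by auto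
  have cj: "C *\<^sub>v unit_vec n j \<in> carrier_vec n" using Cc mult_mat_vec_carrier[of C n n] by simp
  obtain x where x: "x \<in> carrier_vec n" and Mx: "?M *\<^sub>v x = C *\<^sub>v unit_vec n j"
    using solve_lin[OF Mc detM cj] by blast
  have Djx: "?Dj *\<^sub>v x \<in> carrier_vec n" using x mult_mat_vec_carrier[of ?Dj n n] by simp
  define y where "y = unit_vec n j + ?Dj *\<^sub>v x"
  have y: "y \<in> carrier_vec n" unfolding y_def using Djx by simp
  have CDjx: "C *\<^sub>v (?Dj *\<^sub>v x) \<in> carrier_vec n" using Cc Djx mult_mat_vec_carrier[of C n n] by simp
  have "?M *\<^sub>v x = 1\<^sub>m n *\<^sub>v x - (C * ?Dj) *\<^sub>v x" using Cc x by (intro minus_mult_distrib_mat_vec, auto)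
  also have "(C * ?Dj) *\<^sub>v x = C *\<^sub>v (?Dj *\<^sub>v x)" using Cc x by (intro assoc_mult_mat_vec[of _ n n _ n], auto)
  finally have Mx2: "?M *\<^sub>v x = x - C *\<^sub>v (?Dj *\<^sub>v x)" using x by simp
  have Cy: "C *\<^sub>v y = C *\<^sub>v unit_vec n j + C *\<^sub>v (?Dj *\<^sub>v x)" unfolding y_def using Cc Djx
    by (intro mult_add_distrib_mat_vec, auto)
  have xCy: "x = C *\<^sub>v y"
  proof (rule eq_vecI)
    fix i assume "i < dim_vec (C *\<^sub>v y)" hence i: "i < n" using Cc by simp
    have "(?M *\<^sub>v x) $ i = (C *\<^sub>v unit_vec n j) $ i" using Mx by simp
    hence "x $ i - (C *\<^sub>v (?Dj *\<^sub>v x)) $ i = (C *\<^sub>v unit_vec n j) $ i"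
      unfolding Mx2 using i carrier_vecD[OF CDjx] by simp
    hence "x $ i = (C *\<^sub>v unit_vec n j) $ i + (C *\<^sub>v (?Dj *\<^sub>v x)) $ i" by (simp only: diff_eq_eq)
    thus "x $ i = (C *\<^sub>v y) $ i" unfolding Cy using i carrier_vecD[OF CDjx] carrier_vecD[OF cj]
      by (simp only: index_add_vec(1))
  qed (use x Cc in simp)
  have nrm: "(\<Sum>k<n. (cmod (x $ k))^2) = (\<Sum>k<n. (cmod (y $ k))^2)"
  proof -
    have "ip x x = ip y y" unfolding xCy by (rule ip_unitary[OF C y y])
    hence "complex_of_real (\<Sum>k<n. (cmod (x $ k))^2) = complex_of_real (\<Sum>k<n. (cmod (y $ k))^2)"
      by (metis ip_self[OF x] ip_self[OF y])
    thus ?thesis by (simp only: of_real_eq_iff)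
  qed
  have yk: "y $ k = (if k = j then 1 else complex_of_real (?sj k) * x $ k)" if k: "k < n" for k
    unfolding y_def using k x by (simp add: dmat_mult_vec unit_vec_def)
  define f where "f = (\<lambda>k. (cmod (x $ k))^2 - (cmod (y $ k))^2)"
  have fsum: "(\<Sum>k<n. f k) = 0" unfolding f_def using nrm by (simp add: sum_subtractf)
  have fk: "f k = (1 - (?sj k)^2) * (cmod (x $ k))^2" if k: "k < n" "k \<noteq> j" for k
    unfolding f_def using yk[OF k(1)] k by (simp add: norm_mult power_mult_distrib algebra_simps)
  have fk0: "f k \<ge> 0" if k: "k \<in> {..<n} - {j}" for k
  proof -
    have "0 \<le> ?sj k \<and> ?sj k \<le> 1" using s k by auto
    hence "(?sj k)^2 \<le> 1" by (simp add: power_le_one)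
    thus ?thesis using fk[of k] k by simp
  qed
  have fj: "f j = (cmod (x $ j))^2 - 1" unfolding f_def using yk[OF j] by simp
  have split: "(\<Sum>k<n. f k) = f j + (\<Sum>k\<in>{..<n} - {j}. f k)" using j by (simp add: sum.remove)
  have rest: "(\<Sum>k\<in>{..<n} - {j}. f k) \<ge> 0" using fk0 by (intro sum_nonneg, auto)
  have "(cmod (x $ j))^2 \<le> 1" using fsum split rest fj by simp
  hence xj1: "cmod (x $ j) \<le> 1" by (simp add: power_le_one_iff)
  have xj_eq: "x $ k = 0" if xj: "cmod (x $ j) = 1" and k: "k < n" "k \<noteq> j" for k
  proof -
    have "(\<Sum>k\<in>{..<n} - {j}. f k) = 0" using fsum split fj xj by simp
    hence "f k = 0" using sum_nonneg_eq_0_iff[of "{..<n} - {j}" f] fk0 k by auto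
    moreover have "(?sj k)^2 < 1" using s k by (simp add: power_less_one_iff abs_less_iff)
    ultimately show ?thesis using fk[OF k] by simp
  qed
  let ?c = "- complex_of_real (s j)"
  have Mcx: "?M *\<^sub>v (?c \<cdot>\<^sub>v x) = ?c \<cdot>\<^sub>v (C *\<^sub>v unit_vec n j)"
    unfolding Mx[symmetric] using Mc x by (intro mult_mat_vec[of _ n n], auto)
  have newM: "1\<^sub>m n - C * dmat n (\<lambda>k. complex_of_real (if k < Suc j then s k else 0))
     = ?M + colupd n j (?M *\<^sub>v (?c \<cdot>\<^sub>v x))"
  proof (rule eq_matI)
    fix a b assume "a < dim_row (?M + colupd n j (?M *\<^sub>v (?c \<cdot>\<^sub>v x)))" "b < dim_col (?M + colupd n j (?M *\<^sub>v (?c \<cdot>\<^sub>v x)))"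
    hence a: "a < n" and b: "b < n" by (auto simp: colupd_def)
    note Cd = carrier_matD[OF Cc]
    have e1: "(C * dmat n (\<lambda>k. complex_of_real (if k < Suc j then s k else 0))) $$ (a,b)
       = C $$ (a,b) * complex_of_real (if b < Suc j then s b else 0)"
      by (rule mult_dmat_index[OF Cc a b])
    have e2: "(C * ?Dj) $$ (a,b) = C $$ (a,b) * complex_of_real (?sj b)" by (rule mult_dmat_index[OF Cc a b])
    have e3: "(C *\<^sub>v unit_vec n j) $ a = C $$ (a,j)" by (rule mat_vec_unit_index[OF Cc a j])
    show "(1\<^sub>m n - C * dmat n (\<lambda>k. complex_of_real (if k < Suc j then s k else 0))) $$ (a,b)
      = (?M + colupd n j (?M *\<^sub>v (?c \<cdot>\<^sub>v x))) $$ (a,b)"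
      unfolding Mcx using a b Cd e1 e2 e3 carrier_vecD[OF cj] by (auto simp: colupd_def)
  qed (use Cc in \<open>auto simp: colupd_def\<close>)
  have detnew: "det (1\<^sub>m n - C * dmat n (\<lambda>k. complex_of_real (if k < Suc j then s k else 0)))
     = det ?M * (1 - complex_of_real (s j) * x $ j)"
    unfolding newM using col_update[OF Mc _ j, of "?c \<cdot>\<^sub>v x"] x j by simp
  let ?B = "1 - s j"
  have Bpos: "?B > 0" using s j by simp
  have bB: "cmod (1 - complex_of_real (s j) * x $ j) \<ge> ?B" using cmod_one_minus[OF _ xj1] s j by simp
  have prodS: "(\<Prod>k<Suc j. 1 - s k) = ?A * ?B" by simp
  have ge: "cmod (det ?M) * cmod (1 - complex_of_real (s j) * x $ j) \<ge> ?A * ?B"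
    using IH1 bB Apos Bpos by (intro mult_mono, auto)
  show ?case
  proof (intro conjI impI allI)
    show "(\<Prod>k<Suc j. 1 - s k) \<le> cmod (det (1\<^sub>m n - C * dmat n (\<lambda>k. complex_of_real (if k < Suc j then s k else 0))))"
      unfolding detnew prodS norm_mult using ge .
  next
    fix k assume eq: "cmod (det (1\<^sub>m n - C * dmat n (\<lambda>k. complex_of_real (if k < Suc j then s k else 0)))) = (\<Prod>k<Suc j. 1 - s k)"
      and k: "k < Suc j" and sk: "s k > 0"
    have "cmod (det ?M) = ?A \<and> cmod (1 - complex_of_real (s j) * x $ j) = ?B"
      using eq unfolding detnew prodS norm_mult using prod_eq_min[OF Apos IH1 Bpos bB] by simp
    hence eqA: "cmod (det ?M) = ?A" and eqB: "cmod (1 - complex_of_real (s j) * x $ j) = ?B" by auto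
    show "C *\<^sub>v unit_vec n k = unit_vec n k"
    proof (cases "k < j")
      case True thus ?thesis using IH2 eqA sk by simp
    next
      case False
      hence kj: "k = j" using k by simp
      have x1: "x $ j = 1" using cmod_one_minus_eq[OF _ xj1 eqB] sk kj by simp
      have xe: "x = unit_vec n j"
      proof (rule eq_vecI)
        fix i assume "i < dim_vec (unit_vec n j)" hence i: "i < n" by simp
        show "x $ i = unit_vec n j $ i"
        proof (cases "i = j")
          case True thus ?thesis using x1 i by simp
        next
          case False thus ?thesis using xj_eq[of i] x1 i by (simp add: unit_vec_def)
        qed
      qed (use x in simp)
      have "?Dj *\<^sub>v unit_vec n j = 0\<^sub>v n" using j by (intro eq_vecI, auto simp: dmat_mult_vec)
      hence "y = unit_vec n j" unfolding y_def xe by simp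
      thus ?thesis using xCy xe kj by simp
    qed
  qed
qed

lemma lemG: assumes C: "unitary_mat n C" and s: "\<forall>k<n. 0 \<le> s k \<and> s k < 1"
  shows "cmod (det (1\<^sub>m n - C * dmat n (\<lambda>k. complex_of_real (s k)))) \<ge> (\<Prod>k<n. 1 - s k) \<and>
    (cmod (det (1\<^sub>m n - C * dmat n (\<lambda>k. complex_of_real (s k)))) = (\<Prod>k<n. 1 - s k)
      \<longrightarrow> C * dmat n (\<lambda>k. complex_of_real (s k)) = dmat n (\<lambda>k. complex_of_real (s k)))"
proof -
  have Cc: "C \<in> carrier_mat n n" using C unitary_carrier by auto
  have e: "dmat n (\<lambda>k. complex_of_real (if k < n then s k else 0)) = dmat n (\<lambda>k. complex_of_real (s k))"
    by (intro eq_matI, auto)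
  have L: "cmod (det (1\<^sub>m n - C * dmat n (\<lambda>k. complex_of_real (s k)))) \<ge> (\<Prod>k<n. 1 - s k) \<and>
    (cmod (det (1\<^sub>m n - C * dmat n (\<lambda>k. complex_of_real (s k)))) = (\<Prod>k<n. 1 - s k)
      \<longrightarrow> (\<forall>k<n. s k > 0 \<longrightarrow> C *\<^sub>v unit_vec n k = unit_vec n k))"
    using lemG_ind[OF C s, of n] unfolding e by simp
  show ?thesis
  proof (intro conjI impI)
    show "cmod (det (1\<^sub>m n - C * dmat n (\<lambda>k. complex_of_real (s k)))) \<ge> (\<Prod>k<n. 1 - s k)" using L by simp
    assume "cmod (det (1\<^sub>m n - C * dmat n (\<lambda>k. complex_of_real (s k)))) = (\<Prod>k<n. 1 - s k)"
    hence ce: "\<forall>k<n. s k > 0 \<longrightarrow> C *\<^sub>v unit_vec n k = unit_vec n k" using L by simp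
    show "C * dmat n (\<lambda>k. complex_of_real (s k)) = dmat n (\<lambda>k. complex_of_real (s k))"
    proof (rule eq_matI)
      fix a b assume "a < dim_row (dmat n (\<lambda>k. complex_of_real (s k)))" "b < dim_col (dmat n (\<lambda>k. complex_of_real (s k)))"
      hence a: "a < n" and b: "b < n" by auto
      have "(C * dmat n (\<lambda>k. complex_of_real (s k))) $$ (a,b) = C $$ (a,b) * complex_of_real (s b)"
        by (rule mult_dmat_index[OF Cc a b])
      also have "\<dots> = dmat n (\<lambda>k. complex_of_real (s k)) $$ (a,b)"
      proof (cases "s b > 0")
        case True
        have "C $$ (a,b) = (C *\<^sub>v unit_vec n b) $ a" using mat_vec_unit_index[OF Cc a b] by simp
        also have "\<dots> = unit_vec n b $ a" using ce True b by simp
        finally show ?thesis using a b by (simp add: unit_vec_def)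
      next
        case False
        hence "s b = 0" using s b by force
        thus ?thesis using a b by simp
      qed
      finally show "(C * dmat n (\<lambda>k. complex_of_real (s k))) $$ (a,b) = dmat n (\<lambda>k. complex_of_real (s k)) $$ (a,b)" .
    qed (use Cc in auto)
  qed
qed

lemma unitary_cancel: assumes V: "unitary_mat n V" and Z: "Z \<in> carrier_mat n k"
  shows "V * (adj_mat V * Z) = Z"
proof -
  have Vc: "V \<in> carrier_mat n n" using V unitary_carrier by auto
  have "V * (adj_mat V * Z) = (V * adj_mat V) * Z" using Vc Z by (intro assoc_mult_mat[symmetric, of _ n n _ n _ k], auto)
  thus ?thesis using unitary_right[OF V] Z by simp
qed

lemma unitary_cancel': assumes V: "unitary_mat n V" and Z: "Z \<in> carrier_mat n k"
  shows "adj_mat V * (V * Z) = Z"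
  using unitary_cancel[OF unitary_adj[OF V] Z] by simp

lemma lemG_W: assumes U: "unitary_mat n U" and V: "unitary_mat n V"
  and W: "W = V * dmat n (\<lambda>k. complex_of_real (s k)) * adj_mat V"
  and s: "\<forall>k<n. 0 \<le> s k \<and> s k < 1"
  shows "cmod (det (1\<^sub>m n - U * W)) \<ge> (\<Prod>k<n. 1 - s k) \<and>
    (cmod (det (1\<^sub>m n - U * W)) = (\<Prod>k<n. 1 - s k) \<longrightarrow> U * W = W)"
proof -
  have Uc: "U \<in> carrier_mat n n" using U unitary_carrier by auto
  have Vc: "V \<in> carrier_mat n n" using V unitary_carrier by auto
  have aVc: "adj_mat V \<in> carrier_mat n n" using Vc by simp
  let ?D = "dmat n (\<lambda>k. complex_of_real (s k))"
  define C where "C = adj_mat V * U * V"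
  have C: "unitary_mat n C" unfolding C_def by (intro unitary_mult unitary_adj U V)
  have Cc: "C \<in> carrier_mat n n" using C unitary_carrier by auto
  have CD: "C * ?D \<in> carrier_mat n n" using Cc by simp
  have Zc: "U * V * ?D \<in> carrier_mat n n" using Uc Vc by (intro triple_carrier, auto)
  have "C * ?D = adj_mat V * (U * V * ?D)" unfolding C_def using Uc Vc aVc
    by (simp add: assoc_mult_mat[of _ n n _ n _ n])
  hence "V * (C * ?D) = U * V * ?D" using unitary_cancel[OF V Zc] by simp
  hence VCDV: "V * (C * ?D) * adj_mat V = U * W" unfolding W using Uc Vc aVc
    by (simp add: assoc_mult_mat[of _ n n _ n _ n])
  have eq1: "1\<^sub>m n - U * W = V * (1\<^sub>m n - C * ?D) * adj_mat V"
  proof -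
    have "V * (1\<^sub>m n - C * ?D) = V * 1\<^sub>m n - V * (C * ?D)" using Vc CD by (intro mult_minus_distrib_mat, auto)
    hence "V * (1\<^sub>m n - C * ?D) * adj_mat V = (V - V * (C * ?D)) * adj_mat V" using Vc by simp
    also have "\<dots> = V * adj_mat V - V * (C * ?D) * adj_mat V" using Vc CD aVc
      by (intro minus_mult_distrib_mat[of _ n n], auto)
    finally show ?thesis unfolding VCDV using unitary_right[OF V] by simp
  qed
  have dd: "det (1\<^sub>m n - U * W) = det (1\<^sub>m n - C * ?D)" unfolding eq1
    using minus_carrier_mat[OF CD] by (intro det_sandwich[OF V])
  from lemG[OF C s]
  have L: "cmod (det (1\<^sub>m n - C * ?D)) \<ge> (\<Prod>k<n. 1 - s k)"
    and L2: "cmod (det (1\<^sub>m n - C * ?D)) = (\<Prod>k<n. 1 - s k) \<longrightarrow> C * ?D = ?D" by auto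
  show ?thesis
  proof (intro conjI impI)
    show "cmod (det (1\<^sub>m n - U * W)) \<ge> (\<Prod>k<n. 1 - s k)" using L dd by simp
    assume "cmod (det (1\<^sub>m n - U * W)) = (\<Prod>k<n. 1 - s k)"
    hence "C * ?D = ?D" using L2 dd by simp
    hence "V * (C * ?D) * adj_mat V = W" unfolding W by simp
    thus "U * W = W" unfolding VCDV .
  qed
qed

definition gfun :: "real \<Rightarrow> real" where "gfun t = ln (1 + t) - ln (1 - t)"

lemma gfun_convex: "convex_on {0..<1} gfun"
proof (rule convex_on_realI[where f' = "\<lambda>t. 1 / (1 + t) + 1 / (1 - t)"])
  show "connected {0..<(1::real)}" by (simp add: connected_Ico)
  fix x :: real assume x: "x \<in> {0..<1}"
  show "(gfun has_real_derivative 1 / (1 + x) + 1 / (1 - x)) (at x)"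
    unfolding gfun_def using x by (auto intro!: derivative_eq_intros)
next
  fix x y :: real assume x: "x \<in> {0..<1}" and y: "y \<in> {0..<1}" and xy: "x \<le> y"
  have "1 / (1 + x) + 1 / (1 - x) = 2 / (1 - x^2)" using x by (simp add: field_simps power2_eq_square)
  also have "\<dots> \<le> 2 / (1 - y^2)"
  proof -
    have "x^2 \<le> y^2" using x xy by (intro power_mono, auto)
    moreover have "y^2 < 1" using y by (simp add: power_less_one_iff abs_less_iff)
    ultimately show ?thesis by (intro divide_left_mono, auto)
  qed
  also have "\<dots> = 1 / (1 + y) + 1 / (1 - y)" using y by (simp add: field_simps power2_eq_square)
  finally show "1 / (1 + x) + 1 / (1 - x) \<le> 1 / (1 + y) + 1 / (1 - y)" .
qed

lemma gfun_jensen: assumes "finite S" "S \<noteq> {}" "(\<Sum>i\<in>S. a i) = 1" "\<And>i. i \<in> S \<Longrightarrow> a i \<ge> 0"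
  "\<And>i. i \<in> S \<Longrightarrow> 0 \<le> y i \<and> y i < 1"
  shows "gfun (\<Sum>i\<in>S. a i * y i) \<le> (\<Sum>i\<in>S. a i * gfun (y i))"
  using convex_on_sum[OF assms(1,2) gfun_convex assms(3), of y] assms(4,5) by auto

lemma convex_comb_lt1: fixes B y :: "nat \<Rightarrow> real"
  assumes "n > 0" "(\<Sum>j<n. B j) = 1" "\<forall>j<n. B j \<ge> 0" "\<forall>j<n. 0 \<le> y j \<and> y j < 1"
  shows "0 \<le> (\<Sum>j<n. B j * y j) \<and> (\<Sum>j<n. B j * y j) < 1"
proof
  show "0 \<le> (\<Sum>j<n. B j * y j)" using assms by (intro sum_nonneg, auto)
  obtain j where j: "j < n" "B j > 0"
  proof (rule ccontr)
    assume "\<not> thesis"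
    hence "\<forall>j<n. B j \<le> 0" using that by force
    hence "(\<Sum>j<n. B j) \<le> 0" by (intro sum_nonpos, auto)
    thus False using assms(2) by simp
  qed
  have "(\<Sum>k<n. B k * (1 - y k)) > 0"
  proof -
    have "(\<Sum>k<n. B k * (1 - y k)) \<ge> B j * (1 - y j)"
      using j assms by (intro member_le_sum, auto)
    moreover have "B j * (1 - y j) > 0" using j assms by simp
    ultimately show ?thesis by simp
  qed
  thus "(\<Sum>j<n. B j * y j) < 1" using assms(2) by (simp add: algebra_simps sum_subtractf sum_distrib_left)
qed

lemma jensen_main: fixes w :: "nat \<Rightarrow> real" and d :: "nat \<Rightarrow> nat \<Rightarrow> real" and B :: "nat \<Rightarrow> nat \<Rightarrow> nat \<Rightarrow> real"
  assumes m: "m > 0" and wpos: "\<forall>i<m. w i > 0" and wsum: "(\<Sum>i<m. w i) = 1"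
  and d: "\<forall>i<m. \<forall>j<n. 0 \<le> d i j \<and> d i j < 1"
  and Bnn: "\<forall>i<m. \<forall>k<n. \<forall>j<n. B i k j \<ge> 0"
  and Brow: "\<forall>i<m. \<forall>k<n. (\<Sum>j<n. B i k j) = 1"
  and Bcol: "\<forall>i<m. \<forall>j<n. (\<Sum>k<n. B i k j) = 1"
  shows "(\<Sum>k<n. gfun (\<Sum>i<m. w i * (\<Sum>j<n. B i k j * d i j))) \<le> (\<Sum>i<m. w i * (\<Sum>j<n. gfun (d i j)))"
proof (cases "n = 0")
  case True thus ?thesis by simp
next
  case False
  hence n: "n > 0" by simp
  have a01: "0 \<le> (\<Sum>j<n. B i k j * d i j) \<and> (\<Sum>j<n. B i k j * d i j) < 1" if "i < m" "k < n" for i k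
    using convex_comb_lt1[OF n, of "B i k" "d i"] Brow Bnn d that by auto
  have step: "gfun (\<Sum>i<m. w i * (\<Sum>j<n. B i k j * d i j)) \<le> (\<Sum>i<m. w i * (\<Sum>j<n. B i k j * gfun (d i j)))"
    if k: "k < n" for k
  proof -
    have "gfun (\<Sum>i<m. w i * (\<Sum>j<n. B i k j * d i j)) \<le> (\<Sum>i<m. w i * gfun (\<Sum>j<n. B i k j * d i j))"
      using wpos wsum a01 k m by (intro gfun_jensen, auto intro: less_imp_le)
    also have "\<dots> \<le> (\<Sum>i<m. w i * (\<Sum>j<n. B i k j * gfun (d i j)))"
    proof (intro sum_mono mult_left_mono)
      fix i assume i: "i \<in> {..<m}"
      show "gfun (\<Sum>j<n. B i k j * d i j) \<le> (\<Sum>j<n. B i k j * gfun (d i j))"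
        using Brow Bnn d i k n by (intro gfun_jensen, auto)
      show "0 \<le> w i" using wpos i by (auto intro: less_imp_le)
    qed
    finally show ?thesis .
  qed
  have "(\<Sum>k<n. gfun (\<Sum>i<m. w i * (\<Sum>j<n. B i k j * d i j)))
      \<le> (\<Sum>k<n. \<Sum>i<m. w i * (\<Sum>j<n. B i k j * gfun (d i j)))"
    using step by (intro sum_mono, auto)
  also have "\<dots> = (\<Sum>i<m. \<Sum>k<n. w i * (\<Sum>j<n. B i k j * gfun (d i j)))" by (rule sum.swap)
  also have "\<dots> = (\<Sum>i<m. w i * (\<Sum>j<n. (\<Sum>k<n. B i k j) * gfun (d i j)))"
  proof (intro sum.cong refl)
    fix i assume i: "i \<in> {..<m}"
    have "(\<Sum>k<n. w i * (\<Sum>j<n. B i k j * gfun (d i j))) = w i * (\<Sum>k<n. \<Sum>j<n. B i k j * gfun (d i j))"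
      by (simp add: sum_distrib_left)
    also have "(\<Sum>k<n. \<Sum>j<n. B i k j * gfun (d i j)) = (\<Sum>j<n. \<Sum>k<n. B i k j * gfun (d i j))" by (rule sum.swap)
    also have "\<dots> = (\<Sum>j<n. (\<Sum>k<n. B i k j) * gfun (d i j))" by (simp add: sum_distrib_right)
    finally show "(\<Sum>k<n. w i * (\<Sum>j<n. B i k j * gfun (d i j))) = w i * (\<Sum>j<n. (\<Sum>k<n. B i k j) * gfun (d i j))" .
  qed
  also have "\<dots> = (\<Sum>i<m. w i * (\<Sum>j<n. gfun (d i j)))" using Bcol by simp
  finally show ?thesis .
qed

lemma sandwich_index: assumes V: "V \<in> carrier_mat n n" and a: "a < n" and b: "b < n"
  shows "(V * dmat n f * adj_mat V) $$ (a,b) = (\<Sum>k<n. V $$ (a,k) * f k * cnj (V $$ (b,k)))"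
proof -
  have VD: "V * dmat n f \<in> carrier_mat n n" using V by simp
  have "(V * dmat n f * adj_mat V) $$ (a,b) = (\<Sum>k<n. (V * dmat n f) $$ (a,k) * adj_mat V $$ (k,b))"
    using VD V a b by (simp add: row_dot[of "V * dmat n f" n n])
  also have "\<dots> = (\<Sum>k<n. V $$ (a,k) * f k * cnj (V $$ (b,k)))"
  proof (intro sum.cong refl)
    fix k assume "k \<in> {..<n}" hence k: "k < n" by simp
    have "(V * dmat n f) $$ (a,k) = V $$ (a,k) * f k" by (rule mult_dmat_index[OF V a k])
    thus "(V * dmat n f) $$ (a,k) * adj_mat V $$ (k,b) = V $$ (a,k) * f k * cnj (V $$ (b,k))"
      using V k b by simp
  qed
  finally show ?thesis .
qed

lemma unitary_rows: assumes V: "unitary_mat n V" and a: "a < n" and b: "b < n"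
  shows "(\<Sum>k<n. V $$ (a,k) * cnj (V $$ (b,k))) = (if a = b then 1 else 0)"
proof -
  have Vc: "V \<in> carrier_mat n n" using V unitary_carrier by auto
  have "(V * adj_mat V) $$ (a,b) = (\<Sum>k<n. V $$ (a,k) * adj_mat V $$ (k,b))"
    using Vc a b by (simp add: row_dot[of V n n])
  also have "\<dots> = (\<Sum>k<n. V $$ (a,k) * cnj (V $$ (b,k)))" using Vc a b by (intro sum.cong refl, auto)
  finally show ?thesis using unitary_right[OF V] a b by simp
qed

lemma char_poly_decomp: assumes V: "unitary_mat n V" and P: "P = V * dmat n (\<lambda>k. complex_of_real (d k)) * adj_mat V"
  shows "poly (char_poly P) x = (\<Prod>k<n. x - complex_of_real (d k))"
proof -
  have Vc: "V \<in> carrier_mat n n" using V unitary_carrier by auto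
  have Pc: "P \<in> carrier_mat n n" unfolding P using Vc by (intro triple_carrier, auto)
  have "- char_matrix P x = V * dmat n (\<lambda>k. x - complex_of_real (d k)) * adj_mat V"
  proof (rule eq_matI)
    fix a b assume "a < dim_row (V * dmat n (\<lambda>k. x - complex_of_real (d k)) * adj_mat V)"
      "b < dim_col (V * dmat n (\<lambda>k. x - complex_of_real (d k)) * adj_mat V)"
    hence a: "a < n" and b: "b < n" using Vc by auto
    have "(V * dmat n (\<lambda>k. x - complex_of_real (d k)) * adj_mat V) $$ (a,b)
       = (\<Sum>k<n. V $$ (a,k) * (x - complex_of_real (d k)) * cnj (V $$ (b,k)))" by (rule sandwich_index[OF Vc a b])
    also have "\<dots> = x * (\<Sum>k<n. V $$ (a,k) * cnj (V $$ (b,k))) - (\<Sum>k<n. V $$ (a,k) * complex_of_real (d k) * cnj (V $$ (b,k)))"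
      by (simp add: sum_distrib_left sum_subtractf algebra_simps)
    also have "(\<Sum>k<n. V $$ (a,k) * complex_of_real (d k) * cnj (V $$ (b,k))) = P $$ (a,b)"
      unfolding P by (rule sandwich_index[OF Vc a b, symmetric])
    finally show "(- char_matrix P x) $$ (a,b) = (V * dmat n (\<lambda>k. x - complex_of_real (d k)) * adj_mat V) $$ (a,b)"
      using unitary_rows[OF V a b] a b Pc by (auto simp: char_matrix_def)
  qed (use Pc Vc in \<open>auto simp: char_matrix_def\<close>)
  hence "poly (char_poly P) x = det (V * dmat n (\<lambda>k. x - complex_of_real (d k)) * adj_mat V)"
    using char_poly_matrix[OF Pc] by simp
  also have "\<dots> = (\<Prod>k<n. x - complex_of_real (d k))" by (simp add: det_sandwich[OF V] det_dmat)
  finally show ?thesis .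
qed

lemma prod_uminus_nat: "(\<Prod>k<n. - (f k :: 'a :: comm_ring_1)) = (-1)^n * (\<Prod>k<n. f k)"
  by (induction n, auto)

lemma abs_decomp: assumes Z: "Z \<in> carrier_mat n n"
  and cp: "char_poly (abs_mat Z) = (\<Prod>k<n. [:- complex_of_real (r k), 1:])"
  and rb: "\<forall>k<n. 0 \<le> r k \<and> r k < 1"
  shows "\<exists>V d. unitary_mat n V \<and> abs_mat Z = V * dmat n (\<lambda>k. complex_of_real (d k)) * adj_mat V
    \<and> (\<forall>k<n. 0 \<le> d k \<and> d k < 1) \<and> (\<Prod>k<n. 1 - d k) = (\<Prod>k<n. 1 - r k) \<and> (\<Prod>k<n. 1 + d k) = (\<Prod>k<n. 1 + r k)"
proof -
  have psd: "psd_mat n (abs_mat Z)" using abs_mat_props[OF Z] by simp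
  obtain V d where V: "unitary_mat n V" and P: "abs_mat Z = V * dmat n (\<lambda>k. complex_of_real (d k)) * adj_mat V"
    and d0: "\<forall>k<n. d k \<ge> 0" using psd_decomp[OF psd] by blast
  have id: "(\<Prod>k<n. x - complex_of_real (d k)) = (\<Prod>k<n. x - complex_of_real (r k))" for x
  proof -
    have "(\<Prod>k<n. x - complex_of_real (d k)) = poly (char_poly (abs_mat Z)) x" using char_poly_decomp[OF V P] by simp
    also have "\<dots> = (\<Prod>k<n. x - complex_of_real (r k))" unfolding cp by (simp add: poly_prod)
    finally show ?thesis .
  qed
  have d1: "d j < 1" if j: "j < n" for j
  proof -
    have "(\<Prod>k<n. complex_of_real (d j) - complex_of_real (d k)) = 0" using j by (intro prod_zero, auto)
    hence "(\<Prod>k<n. complex_of_real (d j) - complex_of_real (r k)) = 0" using id by simp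
    then obtain k where "k < n" "complex_of_real (d j) - complex_of_real (r k) = 0" by auto
    hence "d j = r k" "k < n" by auto
    thus ?thesis using rb by auto
  qed
  have p1: "(\<Prod>k<n. 1 - d k) = (\<Prod>k<n. 1 - r k)"
  proof -
    have "complex_of_real (\<Prod>k<n. 1 - d k) = complex_of_real (\<Prod>k<n. 1 - r k)" using id[of 1] by simp
    thus ?thesis by (simp only: of_real_eq_iff)
  qed
  have p2: "(\<Prod>k<n. 1 + d k) = (\<Prod>k<n. 1 + r k)"
  proof -
    have "(\<Prod>k<n. - (1 + complex_of_real (d k))) = (\<Prod>k<n. - (1 + complex_of_real (r k)))"
      using id[of "-1"] by (simp add: algebra_simps)
    hence "(-1)^n * (\<Prod>k<n. 1 + complex_of_real (d k)) = (-1)^n * (\<Prod>k<n. 1 + complex_of_real (r k))"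
      by (simp only: prod_uminus_nat)
    hence "complex_of_real (\<Prod>k<n. 1 + d k) = complex_of_real (\<Prod>k<n. 1 + r k)" by simp
    thus ?thesis by (simp only: of_real_eq_iff)
  qed
  show ?thesis using V P d0 d1 p1 p2 by blast
qed

lemma wsum_carrier[simp]: "wsum_mat n m w A \<in> carrier_mat n n"
  by (simp add: wsum_mat_def)

lemma wsum_dim[simp]: "dim_row (wsum_mat n m w A) = n" "dim_col (wsum_mat n m w A) = n"
  by (auto simp: wsum_mat_def)

lemma minus_self_mat: "A \<in> carrier_mat n n \<Longrightarrow> A - A = (0\<^sub>m n n :: complex mat)"
  by (intro eq_matI, auto)

lemma zero_mat_vec: "v \<in> carrier_vec k \<Longrightarrow> 0\<^sub>m n k *\<^sub>v v = (0\<^sub>v n :: complex vec)"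
  by (intro eq_vecI, auto simp: row_dot[of "0\<^sub>m n k" n k])

lemma wsum_index: "a < n \<Longrightarrow> b < n \<Longrightarrow> wsum_mat n m w A $$ (a,b) = (\<Sum>i<m. complex_of_real (w i) * A i $$ (a,b))"
  by (simp add: wsum_mat_def)

lemma wsum_adj: assumes "\<forall>i<m. A i \<in> carrier_mat n n \<and> adj_mat (A i) = A i"
  shows "adj_mat (wsum_mat n m w A) = wsum_mat n m w A"
proof (rule eq_matI)
  fix a b assume "a < dim_row (wsum_mat n m w A)" "b < dim_col (wsum_mat n m w A)"
  hence a: "a < n" and b: "b < n" by (auto simp: wsum_mat_def)
  have "adj_mat (wsum_mat n m w A) $$ (a,b) = cnj (\<Sum>i<m. complex_of_real (w i) * A i $$ (b,a))"
    using a b by (simp add: wsum_mat_def)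
  also have "\<dots> = (\<Sum>i<m. complex_of_real (w i) * cnj (A i $$ (b,a)))" by simp
  also have "\<dots> = (\<Sum>i<m. complex_of_real (w i) * A i $$ (a,b))"
  proof (intro sum.cong refl)
    fix i assume "i \<in> {..<m}"
    hence Ai: "A i \<in> carrier_mat n n" and h: "adj_mat (A i) = A i" using assms by auto
    have "cnj (A i $$ (b,a)) = adj_mat (A i) $$ (a,b)" using Ai a b by simp
    thus "complex_of_real (w i) * cnj (A i $$ (b,a)) = complex_of_real (w i) * A i $$ (a,b)"
      unfolding h by simp
  qed
  finally show "adj_mat (wsum_mat n m w A) $$ (a,b) = wsum_mat n m w A $$ (a,b)" using a b by (simp add: wsum_index)
qed (auto simp: wsum_mat_def)

lemma wsum_vec: assumes A: "\<forall>i<m. A i \<in> carrier_mat n n" and v: "v \<in> carrier_vec n" and a: "a < n"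
  shows "(wsum_mat n m w A *\<^sub>v v) $ a = (\<Sum>i<m. complex_of_real (w i) * (A i *\<^sub>v v) $ a)"
proof -
  have "(wsum_mat n m w A *\<^sub>v v) $ a = (\<Sum>k<n. wsum_mat n m w A $$ (a,k) * v $ k)"
    using v a by (intro mat_vec_expand, auto)
  also have "\<dots> = (\<Sum>k<n. \<Sum>i<m. complex_of_real (w i) * A i $$ (a,k) * v $ k)"
    using a by (intro sum.cong refl, simp add: wsum_index sum_distrib_right)
  also have "\<dots> = (\<Sum>i<m. \<Sum>k<n. complex_of_real (w i) * A i $$ (a,k) * v $ k)" by (rule sum.swap)
  also have "\<dots> = (\<Sum>i<m. complex_of_real (w i) * (A i *\<^sub>v v) $ a)"
  proof (intro sum.cong refl)
    fix i assume "i \<in> {..<m}"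
    hence Ai: "A i \<in> carrier_mat n n" using A by simp
    show "(\<Sum>k<n. complex_of_real (w i) * A i $$ (a,k) * v $ k) = complex_of_real (w i) * (A i *\<^sub>v v) $ a"
      using mat_vec_expand[OF Ai v a] by (simp add: sum_distrib_left mult.assoc)
  qed
  finally show ?thesis .
qed

lemma wsum_form: assumes A: "\<forall>i<m. A i \<in> carrier_mat n n" and v: "v \<in> carrier_vec n"
  shows "ip v (wsum_mat n m w A *\<^sub>v v) = (\<Sum>i<m. complex_of_real (w i) * ip v (A i *\<^sub>v v))"
proof -
  have "ip v (wsum_mat n m w A *\<^sub>v v) = (\<Sum>a<n. cnj (v $ a) * (wsum_mat n m w A *\<^sub>v v) $ a)"
    using v mult_mat_vec_carrier[of "wsum_mat n m w A" n n v] by (intro ip_expand, auto)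
  also have "\<dots> = (\<Sum>a<n. \<Sum>i<m. complex_of_real (w i) * (cnj (v $ a) * (A i *\<^sub>v v) $ a))"
  proof (intro sum.cong refl)
    fix a assume "a \<in> {..<n}" hence a: "a < n" by simp
    show "cnj (v $ a) * (wsum_mat n m w A *\<^sub>v v) $ a = (\<Sum>i<m. complex_of_real (w i) * (cnj (v $ a) * (A i *\<^sub>v v) $ a))"
      unfolding wsum_vec[OF A v a] by (simp add: sum_distrib_left algebra_simps)
  qed
  also have "\<dots> = (\<Sum>i<m. \<Sum>a<n. complex_of_real (w i) * (cnj (v $ a) * (A i *\<^sub>v v) $ a))" by (rule sum.swap)
  also have "\<dots> = (\<Sum>i<m. complex_of_real (w i) * ip v (A i *\<^sub>v v))"
  proof (intro sum.cong refl)
    fix i assume "i \<in> {..<m}"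
    hence Ai: "A i \<in> carrier_mat n n" using A by simp
    have "ip v (A i *\<^sub>v v) = (\<Sum>a<n. cnj (v $ a) * (A i *\<^sub>v v) $ a)"
      using v Ai mult_mat_vec_carrier[OF Ai v] by (intro ip_expand, auto)
    thus "(\<Sum>a<n. complex_of_real (w i) * (cnj (v $ a) * (A i *\<^sub>v v) $ a)) = complex_of_real (w i) * ip v (A i *\<^sub>v v)"
      by (simp add: sum_distrib_left)
  qed
  finally show ?thesis .
qed

lemma wsum_const: assumes "\<forall>i<m. A i = B" "(\<Sum>i<m. w i) = 1" "B \<in> carrier_mat n n"
  shows "wsum_mat n m w A = B"
proof (rule eq_matI)
  fix a b assume "a < dim_row B" "b < dim_col B"
  hence a: "a < n" and b: "b < n" using assms by auto
  have "wsum_mat n m w A $$ (a,b) = (\<Sum>i<m. complex_of_real (w i) * B $$ (a,b))"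
    using a b assms by (simp add: wsum_index)
  also have "\<dots> = complex_of_real (\<Sum>i<m. w i) * B $$ (a,b)" by (simp add: sum_distrib_right)
  finally show "wsum_mat n m w A $$ (a,b) = B $$ (a,b)" using assms by simp
qed (use assms in \<open>auto simp: wsum_mat_def\<close>)

lemma decomp_form_bound: assumes V: "unitary_mat n V" and A: "A = V * dmat n (\<lambda>k. complex_of_real (d k)) * adj_mat V"
  and d: "\<forall>k<n. 0 \<le> d k \<and> d k < 1" and v: "v \<in> carrier_vec n"
  shows "ip v (A *\<^sub>v v) = complex_of_real (Re (ip v (A *\<^sub>v v))) \<and> 0 \<le> Re (ip v (A *\<^sub>v v))
     \<and> (v \<noteq> 0\<^sub>v n \<longrightarrow> Re (ip v (A *\<^sub>v v)) < (\<Sum>i<n. (cmod (v $ i))^2))"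
proof -
  have Vc: "V \<in> carrier_mat n n" using V unitary_carrier by auto
  have aVc: "adj_mat V \<in> carrier_mat n n" using Vc by simp
  let ?y = "adj_mat V *\<^sub>v v"
  have y: "?y \<in> carrier_vec n" using aVc v mult_mat_vec_carrier[of "adj_mat V" n n v] by simp
  have f: "ip v (A *\<^sub>v v) = complex_of_real (\<Sum>k<n. d k * (cmod (?y $ k))^2)" by (rule form_decomp[OF V A v])
  have "ip ?y ?y = ip v v" by (rule ip_unitary[OF unitary_adj[OF V] v v])
  hence ny: "(\<Sum>k<n. (cmod (?y $ k))^2) = (\<Sum>k<n. (cmod (v $ k))^2)"
    using ip_self[OF y] ip_self[OF v] by (simp only: of_real_eq_iff)
  have nn: "0 \<le> (\<Sum>k<n. d k * (cmod (?y $ k))^2)" using d by (intro sum_nonneg, auto)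
  have lt: "(\<Sum>k<n. d k * (cmod (?y $ k))^2) < (\<Sum>k<n. (cmod (v $ k))^2)" if v0: "v \<noteq> 0\<^sub>v n"
  proof -
    have "?y \<noteq> 0\<^sub>v n"
    proof
      assume "?y = 0\<^sub>v n"
      hence "(\<Sum>k<n. (cmod (?y $ k))^2) = 0" by simp
      hence "(\<Sum>k<n. (cmod (v $ k))^2) = 0" using ny by simp
      thus False using sum_sq_zero[OF v] v0 by simp
    qed
    then obtain j where j: "j < n" "?y $ j \<noteq> 0" using y by (metis eq_vecI index_zero_vec(1,2) carrier_vecD)
    have "(\<Sum>k<n. (1 - d k) * (cmod (?y $ k))^2) \<ge> (1 - d j) * (cmod (?y $ j))^2"
      using j d by (intro member_le_sum, auto)
    moreover have "(1 - d j) * (cmod (?y $ j))^2 > 0" using j d by simp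
    ultimately have "(\<Sum>k<n. (1 - d k) * (cmod (?y $ k))^2) > 0" by simp
    thus ?thesis using ny by (simp add: algebra_simps sum_subtractf)
  qed
  show ?thesis using f nn lt by simp
qed

lemma one_minus_sandwich: assumes V: "unitary_mat n V"
  shows "1\<^sub>m n - V * dmat n f * adj_mat V = V * dmat n (\<lambda>k. 1 - f k) * adj_mat V"
proof (rule eq_matI)
  have Vc: "V \<in> carrier_mat n n" using V unitary_carrier by auto
  fix a b assume "a < dim_row (V * dmat n (\<lambda>k. 1 - f k) * adj_mat V)" "b < dim_col (V * dmat n (\<lambda>k. 1 - f k) * adj_mat V)"
  hence a: "a < n" and b: "b < n" using Vc by auto
  have "(V * dmat n (\<lambda>k. 1 - f k) * adj_mat V) $$ (a,b) = (\<Sum>k<n. V $$ (a,k) * (1 - f k) * cnj (V $$ (b,k)))"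
    by (rule sandwich_index[OF Vc a b])
  also have "\<dots> = (\<Sum>k<n. V $$ (a,k) * cnj (V $$ (b,k))) - (\<Sum>k<n. V $$ (a,k) * f k * cnj (V $$ (b,k)))"
    by (simp add: sum_subtractf algebra_simps)
  also have "(\<Sum>k<n. V $$ (a,k) * f k * cnj (V $$ (b,k))) = (V * dmat n f * adj_mat V) $$ (a,b)"
    by (rule sandwich_index[OF Vc a b, symmetric])
  finally show "(1\<^sub>m n - V * dmat n f * adj_mat V) $$ (a,b) = (V * dmat n (\<lambda>k. 1 - f k) * adj_mat V) $$ (a,b)"
    using unitary_rows[OF V a b] a b Vc by simp
qed (use V unitary_carrier in auto)

lemma coef_row: assumes Vi: "unitary_mat n Vi" and V: "unitary_mat n V" and k: "k < n"
  shows "(\<Sum>j<n. (cmod ((adj_mat Vi *\<^sub>v (V *\<^sub>v unit_vec n k)) $ j))^2) = 1"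
proof -
  have Vc: "V \<in> carrier_mat n n" using V unitary_carrier by auto
  have Vic: "Vi \<in> carrier_mat n n" using Vi unitary_carrier by auto
  let ?x = "V *\<^sub>v unit_vec n k"
  have x: "?x \<in> carrier_vec n" using Vc mult_mat_vec_carrier[of V n n] by simp
  have y: "adj_mat Vi *\<^sub>v ?x \<in> carrier_vec n" using Vic x mult_mat_vec_carrier[of "adj_mat Vi" n n] by simp
  have "ip (adj_mat Vi *\<^sub>v ?x) (adj_mat Vi *\<^sub>v ?x) = ip ?x ?x" by (rule ip_unitary[OF unitary_adj[OF Vi] x x])
  also have "\<dots> = 1" using ip_unitary[OF V, of "unit_vec n k" "unit_vec n k"] ip_unit[OF k] by simp
  finally have "complex_of_real (\<Sum>j<n. (cmod ((adj_mat Vi *\<^sub>v ?x) $ j))^2) = 1" using ip_self[OF y] by simp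
  thus ?thesis by (simp only: of_real_eq_1_iff)
qed

lemma coef_col: assumes Vi: "unitary_mat n Vi" and V: "unitary_mat n V" and j: "j < n"
  shows "(\<Sum>k<n. (cmod ((adj_mat Vi *\<^sub>v (V *\<^sub>v unit_vec n k)) $ j))^2) = 1"
proof -
  have Vc: "V \<in> carrier_mat n n" using V unitary_carrier by auto
  have Vic: "Vi \<in> carrier_mat n n" using Vi unitary_carrier by auto
  define X where "X = adj_mat Vi * V"
  have X: "unitary_mat n X" unfolding X_def by (intro unitary_mult unitary_adj Vi V)
  have Xc: "X \<in> carrier_mat n n" using X unitary_carrier by auto
  have e: "(adj_mat Vi *\<^sub>v (V *\<^sub>v unit_vec n k)) $ j = X $$ (j,k)" if k: "k < n" for k
  proof -
    have "adj_mat Vi *\<^sub>v (V *\<^sub>v unit_vec n k) = X *\<^sub>v unit_vec n k" unfolding X_def using Vic Vc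
      by (intro assoc_mult_mat_vec[symmetric, of _ n n _ n], auto)
    thus ?thesis using mat_vec_unit_index[OF Xc j k] by simp
  qed
  have "complex_of_real (\<Sum>k<n. (cmod ((adj_mat Vi *\<^sub>v (V *\<^sub>v unit_vec n k)) $ j))^2)
      = (\<Sum>k<n. X $$ (j,k) * cnj (X $$ (j,k)))"
    using e cnj_mult_self by (simp add: mult.commute)
  also have "\<dots> = 1" using unitary_rows[OF X j j] by simp
  finally show ?thesis by (simp only: of_real_eq_1_iff)
qed

lemma ip_minus_right: assumes "v \<in> carrier_vec n" "a \<in> carrier_vec n" "b \<in> carrier_vec n"
  shows "ip v (a - b) = ip v a - ip v b"
  using assms by (simp add: ip_expand[of _ n] sum_subtractf algebra_simps)

lemma var_identity: fixes z :: "nat \<Rightarrow> complex" and w :: "nat \<Rightarrow> real"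
  assumes ws: "(\<Sum>i<m. w i) = 1"
  defines "b \<equiv> (\<Sum>i<m. complex_of_real (w i) * z i)"
  shows "(\<Sum>i<m. w i * (cmod (z i - b))^2) = (\<Sum>i<m. w i * (cmod (z i))^2) - (cmod b)^2"
proof -
  have cs: "(\<Sum>i<m. complex_of_real (w i)) = 1" using ws by (metis of_real_1 of_real_sum)
  have "complex_of_real (\<Sum>i<m. w i * (cmod (z i - b))^2)
     = (\<Sum>i<m. complex_of_real (w i) * (cnj (z i - b) * (z i - b)))"
    by (simp only: of_real_sum of_real_mult cnj_mult_self)
  also have "\<dots> = (\<Sum>i<m. complex_of_real (w i) * (cnj (z i) * z i))
       - cnj b * (\<Sum>i<m. complex_of_real (w i) * z i)
       - b * (\<Sum>i<m. complex_of_real (w i) * cnj (z i))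
       + (\<Sum>i<m. complex_of_real (w i)) * (cnj b * b)"
    by (simp add: sum_subtractf sum.distrib sum_distrib_left sum_distrib_right algebra_simps)
  also have "(\<Sum>i<m. complex_of_real (w i) * cnj (z i)) = cnj b" unfolding b_def by simp
  also have "(\<Sum>i<m. complex_of_real (w i) * z i) = b" unfolding b_def ..
  also have "(\<Sum>i<m. complex_of_real (w i) * (cnj (z i) * z i)) = complex_of_real (\<Sum>i<m. w i * (cmod (z i))^2)"
    by (simp only: of_real_sum of_real_mult cnj_mult_self)
  finally have "complex_of_real (\<Sum>i<m. w i * (cmod (z i - b))^2)
     = complex_of_real (\<Sum>i<m. w i * (cmod (z i))^2) - cnj b * b" unfolding cs by (simp add: algebra_simps)
  also have "cnj b * b = complex_of_real ((cmod b)^2)" by (rule cnj_mult_self)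
  finally show ?thesis by (simp only: of_real_diff[symmetric] of_real_eq_iff)
qed

lemma herm_sq: assumes "P \<in> carrier_mat n n" "adj_mat P = P" "v \<in> carrier_vec n"
  shows "ip v ((P * P) *\<^sub>v v) = complex_of_real (\<Sum>a<n. (cmod ((P *\<^sub>v v) $ a))^2)"
proof -
  have Pv: "P *\<^sub>v v \<in> carrier_vec n" using assms mult_mat_vec_carrier[of P n n] by simp
  have "(P * P) *\<^sub>v v = P *\<^sub>v (P *\<^sub>v v)" using assms by (intro assoc_mult_mat_vec[of _ n n _ n], auto)
  hence "ip v ((P * P) *\<^sub>v v) = ip (adj_mat P *\<^sub>v v) (P *\<^sub>v v)" using ip_adj[OF assms(1,3) Pv] by simp
  also have "\<dots> = complex_of_real (\<Sum>a<n. (cmod ((P *\<^sub>v v) $ a))^2)" unfolding assms(2) by (rule ip_self[OF Pv])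
  finally show ?thesis .
qed

lemma S_minus_form: assumes P: "\<forall>i<m. P i \<in> carrier_mat n n \<and> adj_mat (P i) = P i"
  and ws: "(\<Sum>i<m. w i) = 1" and v: "v \<in> carrier_vec n"
  defines "W \<equiv> wsum_mat n m w P" and "S \<equiv> wsum_mat n m w (\<lambda>i. P i * P i)"
  shows "ip v ((S - W * W) *\<^sub>v v) = complex_of_real (\<Sum>a<n. \<Sum>i<m. w i * (cmod ((P i *\<^sub>v v) $ a - (W *\<^sub>v v) $ a))^2)"
proof -
  have Wc: "W \<in> carrier_mat n n" unfolding W_def by simp
  have Sc: "S \<in> carrier_mat n n" unfolding S_def by simp
  have hW: "adj_mat W = W" unfolding W_def using P by (intro wsum_adj, auto)
  have Pc: "\<forall>i<m. P i \<in> carrier_mat n n" using P by auto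
  have PPc: "\<forall>i<m. P i * P i \<in> carrier_mat n n" using P by auto
  have Sv: "S *\<^sub>v v \<in> carrier_vec n" using Sc v mult_mat_vec_carrier[of S n n] by simp
  have WWv: "(W * W) *\<^sub>v v \<in> carrier_vec n" using Wc v mult_mat_vec_carrier[of "W * W" n n] by simp
  have "(S - W * W) *\<^sub>v v = S *\<^sub>v v - (W * W) *\<^sub>v v" using Sc Wc v by (intro minus_mult_distrib_mat_vec, auto)
  hence "ip v ((S - W * W) *\<^sub>v v) = ip v (S *\<^sub>v v) - ip v ((W * W) *\<^sub>v v)"
    using ip_minus_right[OF v Sv WWv] by simp
  also have "ip v (S *\<^sub>v v) = (\<Sum>i<m. complex_of_real (w i) * ip v ((P i * P i) *\<^sub>v v))"
    unfolding S_def by (rule wsum_form[OF PPc v])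
  also have "\<dots> = (\<Sum>i<m. complex_of_real (w i) * complex_of_real (\<Sum>a<n. (cmod ((P i *\<^sub>v v) $ a))^2))"
  proof (intro sum.cong refl)
    fix i assume "i \<in> {..<m}"
    hence "P i \<in> carrier_mat n n" "adj_mat (P i) = P i" using P by auto
    thus "complex_of_real (w i) * ip v ((P i * P i) *\<^sub>v v) = complex_of_real (w i) * complex_of_real (\<Sum>a<n. (cmod ((P i *\<^sub>v v) $ a))^2)"
      using herm_sq[of "P i" n v] v by simp
  qed
  also have "\<dots> = complex_of_real (\<Sum>i<m. w i * (\<Sum>a<n. (cmod ((P i *\<^sub>v v) $ a))^2))"
    by (simp only: of_real_sum of_real_mult)
  also have "ip v ((W * W) *\<^sub>v v) = complex_of_real (\<Sum>a<n. (cmod ((W *\<^sub>v v) $ a))^2)"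
    by (rule herm_sq[OF Wc hW v])
  finally have e1: "ip v ((S - W * W) *\<^sub>v v) = complex_of_real ((\<Sum>i<m. w i * (\<Sum>a<n. (cmod ((P i *\<^sub>v v) $ a))^2))
     - (\<Sum>a<n. (cmod ((W *\<^sub>v v) $ a))^2))" by simp
  have Wva: "(W *\<^sub>v v) $ a = (\<Sum>i<m. complex_of_real (w i) * (P i *\<^sub>v v) $ a)" if a: "a < n" for a
    unfolding W_def by (rule wsum_vec[OF Pc v a])
  have "(\<Sum>a<n. \<Sum>i<m. w i * (cmod ((P i *\<^sub>v v) $ a - (W *\<^sub>v v) $ a))^2)
     = (\<Sum>a<n. (\<Sum>i<m. w i * (cmod ((P i *\<^sub>v v) $ a))^2) - (cmod ((W *\<^sub>v v) $ a))^2)"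
  proof (intro sum.cong refl)
    fix a assume "a \<in> {..<n}" hence a: "a < n" by simp
    show "(\<Sum>i<m. w i * (cmod ((P i *\<^sub>v v) $ a - (W *\<^sub>v v) $ a))^2)
       = (\<Sum>i<m. w i * (cmod ((P i *\<^sub>v v) $ a))^2) - (cmod ((W *\<^sub>v v) $ a))^2"
      unfolding Wva[OF a] by (rule var_identity[OF ws])
  qed
  also have "\<dots> = (\<Sum>i<m. w i * (\<Sum>a<n. (cmod ((P i *\<^sub>v v) $ a))^2)) - (\<Sum>a<n. (cmod ((W *\<^sub>v v) $ a))^2)"
    by (simp add: sum_subtractf sum_distrib_left sum.swap[of _ "{..<n}" "{..<m}"])
  finally show ?thesis using e1 by simp
qed

lemma S_minus_psd: assumes P: "\<forall>i<m. P i \<in> carrier_mat n n \<and> adj_mat (P i) = P i"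
  and ws: "(\<Sum>i<m. w i) = 1" and wnn: "\<forall>i<m. w i \<ge> 0"
  shows "psd_mat n (wsum_mat n m w (\<lambda>i. P i * P i) - wsum_mat n m w P * wsum_mat n m w P)"
proof -
  let ?W = "wsum_mat n m w P" and ?S = "wsum_mat n m w (\<lambda>i. P i * P i)"
  have Wc: "?W \<in> carrier_mat n n" by simp
  have hW: "adj_mat ?W = ?W" using P by (intro wsum_adj, auto)
  have hS: "adj_mat ?S = ?S"
  proof (intro wsum_adj allI impI conjI)
    fix i assume "i < m"
    hence Pi: "P i \<in> carrier_mat n n" and h: "adj_mat (P i) = P i" using P by auto
    show "P i * P i \<in> carrier_mat n n" using Pi by simp
    show "adj_mat (P i * P i) = P i * P i" using Pi h by (simp add: adj_mult[of _ n n _ n])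
  qed
  have hWW: "adj_mat (?W * ?W) = ?W * ?W" using Wc hW by (simp add: adj_mult[of _ n n _ n])
  have c: "?S - ?W * ?W \<in> carrier_mat n n" using mult_carrier_mat[OF Wc Wc] by (rule minus_carrier_mat)
  have h: "adj_mat (?S - ?W * ?W) = ?S - ?W * ?W"
    using adj_minus[OF wsum_carrier mult_carrier_mat[OF Wc Wc]] hS hWW by simp
  have "Re (ip v ((?S - ?W * ?W) *\<^sub>v v)) \<ge> 0" if v: "v \<in> carrier_vec n" for v
    using S_minus_form[OF P ws v] wnn by (auto intro!: sum_nonneg mult_nonneg_nonneg)
  thus ?thesis unfolding psd_mat_def ip_def[symmetric] using c h by auto
qed

lemma S_eq_all: assumes P: "\<forall>i<m. P i \<in> carrier_mat n n \<and> adj_mat (P i) = P i"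
  and ws: "(\<Sum>i<m. w i) = 1" and wpos: "\<forall>i<m. w i > 0"
  and eq: "wsum_mat n m w (\<lambda>i. P i * P i) = wsum_mat n m w P * wsum_mat n m w P"
  shows "\<forall>i<m. P i = wsum_mat n m w P"
proof (intro allI impI)
  fix i assume i: "i < m"
  let ?W = "wsum_mat n m w P" and ?S = "wsum_mat n m w (\<lambda>i. P i * P i)"
  have Wc: "?W \<in> carrier_mat n n" by simp
  have Pi: "P i \<in> carrier_mat n n" using P i by auto
  have z: "(?S - ?W * ?W) = 0\<^sub>m n n" unfolding eq using mult_carrier_mat[OF Wc Wc] by (rule minus_self_mat)
  show "P i = ?W"
  proof (rule eq_matI)
    fix a b assume "a < dim_row ?W" "b < dim_col ?W"
    hence a: "a < n" and b: "b < n" by (auto simp: wsum_mat_def)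
    let ?v = "unit_vec n b"
    have v: "?v \<in> carrier_vec n" by simp
    have "ip ?v ((?S - ?W * ?W) *\<^sub>v ?v) = 0" unfolding z zero_mat_vec[OF v] by (rule ip_zero_right[OF v])
    hence "complex_of_real (\<Sum>a<n. \<Sum>i<m. w i * (cmod ((P i *\<^sub>v ?v) $ a - (?W *\<^sub>v ?v) $ a))^2) = 0"
      by (metis S_minus_form[OF P ws v])
    hence "(\<Sum>a<n. \<Sum>i<m. w i * (cmod ((P i *\<^sub>v ?v) $ a - (?W *\<^sub>v ?v) $ a))^2) = 0"
      by (simp only: of_real_eq_0_iff)
    hence "(\<Sum>i<m. w i * (cmod ((P i *\<^sub>v ?v) $ a - (?W *\<^sub>v ?v) $ a))^2) = 0"
      using sum_nonneg_eq_0_iff[of "{..<n}" "\<lambda>a. \<Sum>i<m. w i * (cmod ((P i *\<^sub>v ?v) $ a - (?W *\<^sub>v ?v) $ a))^2"] a wpos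
      by (force intro!: sum_nonneg)
    hence "w i * (cmod ((P i *\<^sub>v ?v) $ a - (?W *\<^sub>v ?v) $ a))^2 = 0"
      using sum_nonneg_eq_0_iff[of "{..<m}" "\<lambda>i. w i * (cmod ((P i *\<^sub>v ?v) $ a - (?W *\<^sub>v ?v) $ a))^2"] i wpos
      by (force intro!: sum_nonneg)
    moreover have "w i \<noteq> 0" using wpos i by force
    ultimately have "(P i *\<^sub>v ?v) $ a = (?W *\<^sub>v ?v) $ a" by simp
    thus "P i $$ (a,b) = ?W $$ (a,b)" using mat_vec_unit_index[OF Pi a b] mat_vec_unit_index[OF Wc a b] by simp
  qed (use Pi in auto)
qed

lemma pd_one_minus_S: assumes m: "m > 0" and wpos: "\<forall>i<m. w i > 0" and ws: "(\<Sum>i<m. w i) = 1"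
  and dec: "\<forall>i<m. unitary_mat n (VV i) \<and> P i = VV i * dmat n (\<lambda>k. complex_of_real (dd i k)) * adj_mat (VV i)
     \<and> (\<forall>k<n. 0 \<le> dd i k \<and> dd i k < 1)"
  shows "pd_mat n (1\<^sub>m n - wsum_mat n m w (\<lambda>i. P i * P i))"
proof -
  let ?S = "wsum_mat n m w (\<lambda>i. P i * P i)"
  have Pc: "\<forall>i<m. P i \<in> carrier_mat n n" using dec unitary_carrier by (auto intro!: triple_carrier)
  have hP: "\<forall>i<m. adj_mat (P i) = P i" using dec herm_of_decomp by blast
  have PPc: "\<forall>i<m. P i * P i \<in> carrier_mat n n" using Pc by auto
  have Sc: "?S \<in> carrier_mat n n" by simp
  have hS: "adj_mat ?S = ?S"
    using Pc hP by (intro wsum_adj allI impI conjI, auto simp: adj_mult[of _ n n _ n])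
  have PP: "P i * P i = VV i * dmat n (\<lambda>k. complex_of_real (dd i k * dd i k)) * adj_mat (VV i)" if i: "i < m" for i
  proof -
    have V: "unitary_mat n (VV i)" and Pi: "P i = VV i * dmat n (\<lambda>k. complex_of_real (dd i k)) * adj_mat (VV i)"
      using dec i by auto
    show ?thesis unfolding Pi unitary_sandwich_sq[OF V dmat_carrier] dmat_mult by (simp add: of_real_mult)
  qed
  have form: "Re (ip v ((1\<^sub>m n - ?S) *\<^sub>v v)) > 0" if v: "v \<in> carrier_vec n" and v0: "v \<noteq> 0\<^sub>v n" for v
  proof -
    let ?N = "\<Sum>a<n. (cmod (v $ a))^2"
    have Sv: "?S *\<^sub>v v \<in> carrier_vec n" using Sc v mult_mat_vec_carrier[of ?S n n] by simp
    have "(1\<^sub>m n - ?S) *\<^sub>v v = 1\<^sub>m n *\<^sub>v v - ?S *\<^sub>v v" using Sc v by (intro minus_mult_distrib_mat_vec, auto)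
    hence "ip v ((1\<^sub>m n - ?S) *\<^sub>v v) = ip v v - ip v (?S *\<^sub>v v)" using ip_minus_right[OF v v Sv] v by simp
    also have "ip v (?S *\<^sub>v v) = (\<Sum>i<m. complex_of_real (w i) * ip v ((P i * P i) *\<^sub>v v))" by (rule wsum_form[OF PPc v])
    finally have e: "Re (ip v ((1\<^sub>m n - ?S) *\<^sub>v v)) = ?N - (\<Sum>i<m. w i * Re (ip v ((P i * P i) *\<^sub>v v)))"
      using ip_self[OF v] by (simp add: Re_sum)
    have lt: "Re (ip v ((P i * P i) *\<^sub>v v)) < ?N" if i: "i < m" for i
    proof -
      have b: "\<forall>k<n. 0 \<le> dd i k * dd i k \<and> dd i k * dd i k < 1"
      proof (intro allI impI conjI)
        fix k assume k: "k < n"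
        have d: "0 \<le> dd i k" "dd i k < 1" using dec i k by auto
        show "0 \<le> dd i k * dd i k" using d by simp
        have "dd i k * dd i k \<le> dd i k * 1" using d by (intro mult_left_mono, auto)
        thus "dd i k * dd i k < 1" using d by simp
      qed
      show ?thesis using decomp_form_bound[OF _ PP[OF i] b v] dec i v0 by auto
    qed
    have "(\<Sum>i<m. w i * Re (ip v ((P i * P i) *\<^sub>v v))) < (\<Sum>i<m. w i * ?N)"
      using m lt wpos by (intro sum_strict_mono, auto)
    also have "\<dots> = ?N" using ws by (simp add: sum_distrib_right[symmetric])
    finally show ?thesis using e by simp
  qed
  have c: "1\<^sub>m n - ?S \<in> carrier_mat n n" using Sc by (rule minus_carrier_mat)
  have h: "adj_mat (1\<^sub>m n - ?S) = 1\<^sub>m n - ?S" using hS Sc by (simp add: adj_minus[of _ n n])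
  show ?thesis unfolding pd_mat_def using c h form by auto
qed

lemma gfun_sum_ln: fixes n :: nat assumes "\<forall>k<n. 0 \<le> d k \<and> d k < 1"
  shows "(\<Sum>k<n. gfun (d k)) = ln (\<Prod>k<n. 1 + d k) - ln (\<Prod>k<n. 1 - d k)"
proof -
  have "ln (\<Prod>k<n. 1 + d k) = (\<Sum>k<n. ln (1 + d k))" using assms by (intro ln_prod, auto)
  moreover have "ln (\<Prod>k<n. 1 - d k) = (\<Sum>k<n. ln (1 - d k))" using assms by (intro ln_prod, auto)
  ultimately show ?thesis unfolding gfun_def by (simp add: sum_subtractf)
qed

lemma gfun_sum_exp: fixes n :: nat assumes "\<forall>k<n. 0 \<le> d k \<and> d k < 1"
  shows "exp (\<Sum>k<n. gfun (d k)) = (\<Prod>k<n. 1 + d k) / (\<Prod>k<n. 1 - d k)"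
proof -
  have p1: "(\<Prod>k<n. 1 + d k) > 0" using assms by (intro prod_pos, auto)
  have p2: "(\<Prod>k<n. 1 - d k) > 0" using assms by (intro prod_pos, auto)
  show ?thesis unfolding gfun_sum_ln[OF assms] using p1 p2 by (simp add: exp_diff)
qed

lemma rhs_form: fixes n m :: nat assumes r: "\<forall>i<m. \<forall>k<n. 0 \<le> r i k \<and> r i k < 1"
  shows "(\<Prod>k<n. \<Prod>i<m. ((1 + r i k) / (1 - r i k)) powr (w i)) = exp (\<Sum>i<m. w i * (\<Sum>k<n. gfun (r i k)))"
proof -
  have "(\<Prod>k<n. \<Prod>i<m. ((1 + r i k) / (1 - r i k)) powr (w i)) = (\<Prod>k<n. \<Prod>i<m. exp (w i * gfun (r i k)))"
  proof (intro prod.cong refl)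
    fix k i assume "k \<in> {..<n}" "i \<in> {..<m}"
    hence b: "0 \<le> r i k" "r i k < 1" using r by auto
    have "((1 + r i k) / (1 - r i k)) powr (w i) = exp (w i * ln ((1 + r i k) / (1 - r i k)))"
      using b by (simp add: powr_def)
    also have "ln ((1 + r i k) / (1 - r i k)) = gfun (r i k)" unfolding gfun_def using b by (simp add: ln_div)
    finally show "((1 + r i k) / (1 - r i k)) powr (w i) = exp (w i * gfun (r i k))" .
  qed
  also have "\<dots> = exp (\<Sum>k<n. \<Sum>i<m. w i * gfun (r i k))" by (simp add: exp_sum)
  also have "(\<Sum>k<n. \<Sum>i<m. w i * gfun (r i k)) = (\<Sum>i<m. w i * (\<Sum>k<n. gfun (r i k)))"
    by (subst sum.swap, simp add: sum_distrib_left)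
  finally show ?thesis .
qed

lemma det_one_minus: assumes "(A :: complex mat) \<in> carrier_mat n n"
  shows "det (1\<^sub>m n - A) = poly (char_poly A) 1"
proof -
  have "- char_matrix A 1 = 1\<^sub>m n - A" using assms by (intro eq_matI, auto simp: char_matrix_def)
  thus ?thesis using char_poly_matrix[OF assms, of 1] by simp
qed

lemma cancel_invertible: assumes Wc: "W \<in> carrier_mat n n" and d: "det W \<noteq> 0" and Uc: "U \<in> carrier_mat n n"
  and UW: "U * W = (W :: complex mat)"
  shows "U = 1\<^sub>m n"
proof -
  define X where "X = (1 / det W) \<cdot>\<^sub>m Determinant.adj_mat W"
  have aW: "Determinant.adj_mat W \<in> carrier_mat n n" using Determinant.adj_mat(1)[OF Wc] .
  have Xc: "X \<in> carrier_mat n n" unfolding X_def using aW by simp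
  have "W * X = (1 / det W) \<cdot>\<^sub>m (W * Determinant.adj_mat W)" unfolding X_def using Wc aW
    by (simp add: mult_smult_distrib[of _ n n _ n])
  also have "\<dots> = 1\<^sub>m n" unfolding Determinant.adj_mat(2)[OF Wc] using d by (intro eq_matI, auto)
  finally have WX: "W * X = 1\<^sub>m n" .
  have "U = U * (W * X)" unfolding WX using Uc by simp
  also have "\<dots> = (U * W) * X" using Uc Wc Xc by (simp add: assoc_mult_mat[of _ n n _ n _ n])
  also have "\<dots> = 1\<^sub>m n" unfolding UW WX ..
  finally show ?thesis .
qed

lemma same_spectrum_prods: assumes V1: "unitary_mat n V1" and V2: "unitary_mat n V2"
  and e: "V1 * dmat n (\<lambda>k. complex_of_real (d1 k)) * adj_mat V1 = V2 * dmat n (\<lambda>k. complex_of_real (d2 k)) * adj_mat V2"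
  shows "(\<Prod>k<n. 1 - d1 k) = (\<Prod>k<n. 1 - d2 k) \<and> (\<Prod>k<n. 1 + d1 k) = (\<Prod>k<n. 1 + d2 k)"
proof -
  have id: "(\<Prod>k<n. x - complex_of_real (d1 k)) = (\<Prod>k<n. x - complex_of_real (d2 k))" for x
    using char_poly_decomp[OF V1 refl, of d1 x] char_poly_decomp[OF V2 refl, of d2 x] e by simp
  have p1: "(\<Prod>k<n. 1 - d1 k) = (\<Prod>k<n. 1 - d2 k)"
  proof -
    have "complex_of_real (\<Prod>k<n. 1 - d1 k) = complex_of_real (\<Prod>k<n. 1 - d2 k)" using id[of 1] by simp
    thus ?thesis by (simp only: of_real_eq_iff)
  qed
  have p2: "(\<Prod>k<n. 1 + d1 k) = (\<Prod>k<n. 1 + d2 k)"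
  proof -
    have "(\<Prod>k<n. - (1 + complex_of_real (d1 k))) = (\<Prod>k<n. - (1 + complex_of_real (d2 k)))"
      using id[of "-1"] by (simp add: algebra_simps)
    hence "(-1)^n * (\<Prod>k<n. 1 + complex_of_real (d1 k)) = (-1)^n * (\<Prod>k<n. 1 + complex_of_real (d2 k))"
      by (simp only: prod_uminus_nat)
    hence "complex_of_real (\<Prod>k<n. 1 + d1 k) = complex_of_real (\<Prod>k<n. 1 + d2 k)" by simp
    thus ?thesis by (simp only: of_real_eq_iff)
  qed
  show ?thesis using p1 p2 by simp
qed



theorem corollary7:
  fixes n m :: nat and Z :: "nat \<Rightarrow> complex mat" and r :: "nat \<Rightarrow> nat \<Rightarrow> real"
    and U :: "complex mat" and w :: "nat \<Rightarrow> real"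
  assumes Zc: "\<And>i. i < m \<Longrightarrow> Z i \<in> carrier_mat n n"
    and sv: "\<And>i. i < m \<Longrightarrow> char_poly (abs_mat (Z i)) = (\<Prod>k<n. [:- complex_of_real (r i k), 1:])"
    and r_bnd: "\<And>i k. i < m \<Longrightarrow> k < n \<Longrightarrow> 0 \<le> r i k \<and> r i k < 1"
    and U_unit: "unitary_mat n U"
    and w_pos: "\<And>i. i < m \<Longrightarrow> w i > 0"
    and w_sum: "(\<Sum>i<m. w i) = 1"
  defines "LHS \<equiv> Re (det (1\<^sub>m n - wsum_mat n m w (\<lambda>i. adj_mat (Z i) * Z i)))
                   / (cmod (det (1\<^sub>m n - U * wsum_mat n m w (\<lambda>i. abs_mat (Z i))))) ^ 2"
    and "RHS \<equiv> (\<Prod>k<n. \<Prod>i<m. ((1 + r i k) / (1 - r i k)) powr (w i))"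
  shows "LHS \<le> RHS \<and>
         (LHS = RHS \<longleftrightarrow>
           (\<exists>Z0. (\<forall>i<m. abs_mat (Z i) = Z0) \<and> char_poly (U * Z0) = char_poly Z0)) \<and>
         (LHS = RHS \<longrightarrow> (\<forall>i<m. det (abs_mat (Z i)) \<noteq> 0) \<longrightarrow> U = 1\<^sub>m n)"
proof -
  have m0: "m > 0"
  proof (rule ccontr)
    assume "\<not> m > 0" hence "m = 0" by simp
    thus False using w_sum by simp
  qed
  define P where "P = (\<lambda>i. abs_mat (Z i))"
  have Pprop: "psd_mat n (P i) \<and> P i * P i = adj_mat (Z i) * Z i" if "i < m" for i
    unfolding P_def using abs_mat_props[OF Zc[OF that]] .
  have h: "\<forall>i. \<exists>V. \<exists>d. i < m \<longrightarrow> (unitary_mat n V \<and> P i = V * dmat n (\<lambda>k. complex_of_real (d k)) * adj_mat V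
    \<and> (\<forall>k<n. 0 \<le> d k \<and> d k < 1) \<and> (\<Prod>k<n. 1 - d k) = (\<Prod>k<n. 1 - r i k) \<and> (\<Prod>k<n. 1 + d k) = (\<Prod>k<n. 1 + r i k))"
  proof
    fix i show "\<exists>V. \<exists>d. i < m \<longrightarrow> (unitary_mat n V \<and> P i = V * dmat n (\<lambda>k. complex_of_real (d k)) * adj_mat V
    \<and> (\<forall>k<n. 0 \<le> d k \<and> d k < 1) \<and> (\<Prod>k<n. 1 - d k) = (\<Prod>k<n. 1 - r i k) \<and> (\<Prod>k<n. 1 + d k) = (\<Prod>k<n. 1 + r i k))"
    proof (cases "i < m")
      case True
      have rb: "\<forall>k<n. 0 \<le> r i k \<and> r i k < 1" using r_bnd True by auto
      show ?thesis using abs_decomp[OF Zc[OF True] sv[OF True] rb] unfolding P_def by blast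
    next
      case False thus ?thesis by blast
    qed
  qed
  obtain VV where VV0: "\<forall>i. \<exists>d. i < m \<longrightarrow> (unitary_mat n (VV i) \<and> P i = VV i * dmat n (\<lambda>k. complex_of_real (d k)) * adj_mat (VV i)
    \<and> (\<forall>k<n. 0 \<le> d k \<and> d k < 1) \<and> (\<Prod>k<n. 1 - d k) = (\<Prod>k<n. 1 - r i k) \<and> (\<Prod>k<n. 1 + d k) = (\<Prod>k<n. 1 + r i k))"
    using choice[OF h] by blast
  obtain dd where dd0: "\<forall>i. i < m \<longrightarrow> (unitary_mat n (VV i) \<and> P i = VV i * dmat n (\<lambda>k. complex_of_real (dd i k)) * adj_mat (VV i)
    \<and> (\<forall>k<n. 0 \<le> dd i k \<and> dd i k < 1) \<and> (\<Prod>k<n. 1 - dd i k) = (\<Prod>k<n. 1 - r i k) \<and> (\<Prod>k<n. 1 + dd i k) = (\<Prod>k<n. 1 + r i k))"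
    using choice[OF VV0] by blast
  have VVu: "\<And>i. i < m \<Longrightarrow> unitary_mat n (VV i)" using dd0 by blast
  have Pdec: "\<And>i. i < m \<Longrightarrow> P i = VV i * dmat n (\<lambda>k. complex_of_real (dd i k)) * adj_mat (VV i)" using dd0 by blast
  have ddb: "\<And>i. i < m \<Longrightarrow> \<forall>k<n. 0 \<le> dd i k \<and> dd i k < 1" using dd0 by blast
  have dp1: "\<And>i. i < m \<Longrightarrow> (\<Prod>k<n. 1 - dd i k) = (\<Prod>k<n. 1 - r i k)" using dd0 by blast
  have dp2: "\<And>i. i < m \<Longrightarrow> (\<Prod>k<n. 1 + dd i k) = (\<Prod>k<n. 1 + r i k)" using dd0 by blast
  have Pc: "\<forall>i<m. P i \<in> carrier_mat n n" using Pprop psd_herm by blast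
  have PH: "\<forall>i<m. P i \<in> carrier_mat n n \<and> adj_mat (P i) = P i" using Pprop psd_herm by blast
  define W where "W = wsum_mat n m w P"
  define S where "S = wsum_mat n m w (\<lambda>i. P i * P i)"
  have Wc: "W \<in> carrier_mat n n" unfolding W_def by simp
  have Sc: "S \<in> carrier_mat n n" unfolding S_def by simp
  have hW: "adj_mat W = W" unfolding W_def using PH by (rule wsum_adj)
  have SZ: "wsum_mat n m w (\<lambda>i. adj_mat (Z i) * Z i) = S"
  proof (rule eq_matI)
    fix a b assume "a < dim_row S" "b < dim_col S"
    hence a: "a < n" and b: "b < n" unfolding S_def by auto
    show "wsum_mat n m w (\<lambda>i. adj_mat (Z i) * Z i) $$ (a,b) = S $$ (a,b)"
      unfolding S_def using a b Pprop by (simp add: wsum_index)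
  qed (auto simp: S_def)
  have WZ: "wsum_mat n m w (\<lambda>i. abs_mat (Z i)) = W" unfolding W_def P_def ..
  obtain V s where V: "unitary_mat n V" and Wf: "W = V * dmat n (\<lambda>k. complex_of_real (s k)) * adj_mat V"
    using spectral_form[OF Wc hW] by blast
  have Vc: "V \<in> carrier_mat n n" using V unitary_carrier by auto
  define Bc where "Bc = (\<lambda>i k j. (cmod ((adj_mat (VV i) *\<^sub>v (V *\<^sub>v unit_vec n k)) $ j))^2)"
  have s_expr: "s k = (\<Sum>i<m. w i * (\<Sum>j<n. Bc i k j * dd i j))" if k: "k < n" for k
  proof -
    let ?x = "V *\<^sub>v unit_vec n k"
    have x: "?x \<in> carrier_vec n" using Vc mult_mat_vec_carrier[of V n n] by simp
    have "complex_of_real (s k) = ip ?x (W *\<^sub>v ?x)" using unitary_col_form[OF V Wf k] by simp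
    also have "\<dots> = (\<Sum>i<m. complex_of_real (w i) * ip ?x (P i *\<^sub>v ?x))" unfolding W_def by (rule wsum_form[OF Pc x])
    also have "\<dots> = (\<Sum>i<m. complex_of_real (w i) * complex_of_real (\<Sum>j<n. Bc i k j * dd i j))"
    proof (intro sum.cong refl)
      fix i assume "i \<in> {..<m}" hence i: "i < m" by simp
      have "ip ?x (P i *\<^sub>v ?x) = complex_of_real (\<Sum>j<n. dd i j * (cmod ((adj_mat (VV i) *\<^sub>v ?x) $ j))^2)"
        by (rule form_decomp[OF VVu[OF i] Pdec[OF i] x])
      thus "complex_of_real (w i) * ip ?x (P i *\<^sub>v ?x) = complex_of_real (w i) * complex_of_real (\<Sum>j<n. Bc i k j * dd i j)"
        unfolding Bc_def by (simp add: mult.commute)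
    qed
    also have "\<dots> = complex_of_real (\<Sum>i<m. w i * (\<Sum>j<n. Bc i k j * dd i j))"
      by (simp only: of_real_sum of_real_mult)
    finally show ?thesis by (simp only: of_real_eq_iff)
  qed
  have Bnn: "\<forall>i<m. \<forall>k<n. \<forall>j<n. Bc i k j \<ge> 0" unfolding Bc_def by simp
  have Brow: "\<forall>i<m. \<forall>k<n. (\<Sum>j<n. Bc i k j) = 1" unfolding Bc_def using coef_row[OF VVu V] by blast
  have Bcol: "\<forall>i<m. \<forall>j<n. (\<Sum>k<n. Bc i k j) = 1" unfolding Bc_def using coef_col[OF VVu V] by blast
  have s_b: "\<forall>k<n. 0 \<le> s k \<and> s k < 1"
  proof (intro allI impI)
    fix k assume k: "k < n"
    have a01: "0 \<le> (\<Sum>j<n. Bc i k j * dd i j) \<and> (\<Sum>j<n. Bc i k j * dd i j) < 1" if i: "i < m" for i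
      using convex_comb_lt1[of n "Bc i k" "dd i"] k Brow Bnn ddb[OF i] i by auto
    have ti: "0 \<le> w i * (\<Sum>j<n. Bc i k j * dd i j)" if i: "i < m" for i
    proof -
      have "0 \<le> w i" using w_pos[OF i] by simp
      moreover have "0 \<le> (\<Sum>j<n. Bc i k j * dd i j)" using a01[OF i] by simp
      ultimately show ?thesis by simp
    qed
    have "0 \<le> (\<Sum>i<m. w i * (\<Sum>j<n. Bc i k j * dd i j))"
      using ti by (intro sum_nonneg, auto)
    moreover have "(\<Sum>i<m. w i * (\<Sum>j<n. Bc i k j * dd i j)) < (\<Sum>i<m. w i * 1)"
      using a01 w_pos m0 by (intro sum_strict_mono mult_strict_left_mono, auto)
    ultimately show "0 \<le> s k \<and> s k < 1" using s_expr[OF k] w_sum by simp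
  qed
  have G: "cmod (det (1\<^sub>m n - U * W)) \<ge> (\<Prod>k<n. 1 - s k)"
    and G2: "cmod (det (1\<^sub>m n - U * W)) = (\<Prod>k<n. 1 - s k) \<longrightarrow> U * W = W"
    using lemG_W[OF U_unit V Wf s_b] by auto
  have dec: "\<forall>i<m. unitary_mat n (VV i) \<and> P i = VV i * dmat n (\<lambda>k. complex_of_real (dd i k)) * adj_mat (VV i)
     \<and> (\<forall>k<n. 0 \<le> dd i k \<and> dd i k < 1)" using VVu Pdec ddb by blast
  have pdX: "pd_mat n (1\<^sub>m n - S)" unfolding S_def
    using pd_one_minus_S[OF m0 _ w_sum dec] w_pos by blast
  have WWc: "W * W \<in> carrier_mat n n" using Wc by simp
  have Yc: "1\<^sub>m n - W * W \<in> carrier_mat n n" using WWc by (rule minus_carrier_mat)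
  have YX: "(1\<^sub>m n - W * W) - (1\<^sub>m n - S) = S - W * W"
    using Sc WWc Wc by (intro eq_matI, auto)
  have wnn: "\<forall>i<m. 0 \<le> w i" using w_pos by (auto intro: less_imp_le)
  have psdYX: "psd_mat n ((1\<^sub>m n - W * W) - (1\<^sub>m n - S))" unfolding YX
    unfolding S_def W_def by (rule S_minus_psd[OF PH w_sum wnn])
  obtain rx ry where dX: "det (1\<^sub>m n - S) = complex_of_real rx" and dY: "det (1\<^sub>m n - W * W) = complex_of_real ry"
    and rx0: "0 < rx" and rxy: "rx \<le> ry" and rxeq: "rx = ry \<longrightarrow> 1\<^sub>m n - S = 1\<^sub>m n - W * W"
    using det_mono[OF pdX Yc psdYX] by blast
  have ry_val: "ry = (\<Prod>k<n. 1 - s k) * (\<Prod>k<n. 1 + s k)"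
  proof -
    have "W * W = V * dmat n (\<lambda>k. complex_of_real (s k) * complex_of_real (s k)) * adj_mat V"
      unfolding Wf unitary_sandwich_sq[OF V dmat_carrier] dmat_mult ..
    hence "1\<^sub>m n - W * W = V * dmat n (\<lambda>k. 1 - complex_of_real (s k) * complex_of_real (s k)) * adj_mat V"
      using one_minus_sandwich[OF V] by simp
    hence "det (1\<^sub>m n - W * W) = (\<Prod>k<n. 1 - complex_of_real (s k) * complex_of_real (s k))"
      by (simp add: det_sandwich[OF V] det_dmat)
    also have "\<dots> = complex_of_real (\<Prod>k<n. (1 - s k) * (1 + s k))"
      by (simp add: algebra_simps)
    finally have "ry = (\<Prod>k<n. (1 - s k) * (1 + s k))" using dY by (simp only: of_real_eq_iff)
    thus ?thesis by (simp add: prod.distrib)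
  qed
  define Dp where "Dp = (\<Prod>k<n. 1 - s k)"
  have Dp0: "Dp > 0" unfolding Dp_def using s_b by (intro prod_pos, auto)
  define Dn where "Dn = (cmod (det (1\<^sub>m n - U * W)))^2"
  have DnDp: "Dn \<ge> Dp^2" unfolding Dn_def Dp_def using G s_b by (intro power_mono, auto intro!: prod_nonneg)
  have LHSv: "LHS = rx / Dn" unfolding LHS_def SZ WZ Dn_def dX by simp
  define mid where "mid = ry / Dp^2"
  have mid_exp: "mid = exp (\<Sum>k<n. gfun (s k))"
    unfolding mid_def ry_val gfun_sum_exp[OF s_b] Dp_def[symmetric] using Dp0 by (simp add: power2_eq_square)
  have gdd: "(\<Sum>k<n. gfun (r i k)) = (\<Sum>k<n. gfun (dd i k))" if i: "i < m" for i
  proof -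
    have rb: "\<forall>k<n. 0 \<le> r i k \<and> r i k < 1" using r_bnd i by auto
    show ?thesis unfolding gfun_sum_ln[OF rb] gfun_sum_ln[OF ddb[OF i]] dp1[OF i] dp2[OF i] ..
  qed
  have RHSv: "RHS = exp (\<Sum>i<m. w i * (\<Sum>k<n. gfun (dd i k)))"
  proof -
    have rb: "\<forall>i<m. \<forall>k<n. 0 \<le> r i k \<and> r i k < 1" using r_bnd by auto
    have "RHS = exp (\<Sum>i<m. w i * (\<Sum>k<n. gfun (r i k)))" unfolding RHS_def by (rule rhs_form[OF rb])
    also have "(\<Sum>i<m. w i * (\<Sum>k<n. gfun (r i k))) = (\<Sum>i<m. w i * (\<Sum>k<n. gfun (dd i k)))"
      using gdd by (intro sum.cong refl, auto)
    finally show ?thesis .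
  qed
  have jens: "(\<Sum>k<n. gfun (s k)) \<le> (\<Sum>i<m. w i * (\<Sum>k<n. gfun (dd i k)))"
  proof -
    have "(\<Sum>k<n. gfun (s k)) = (\<Sum>k<n. gfun (\<Sum>i<m. w i * (\<Sum>j<n. Bc i k j * dd i j)))"
      using s_expr by (intro sum.cong refl, auto)
    also have "\<dots> \<le> (\<Sum>i<m. w i * (\<Sum>j<n. gfun (dd i j)))"
      using jensen_main[OF m0 _ w_sum _ Bnn Brow Bcol] w_pos ddb by blast
    finally show ?thesis .
  qed
  have mid_le: "mid \<le> RHS" unfolding mid_exp RHSv using jens by simp
  have Dp2: "Dp^2 > 0" using Dp0 by simp
  have Dn0: "Dn > 0" using Dp2 DnDp by linarith
  have l1: "rx / Dn \<le> rx / Dp^2" using rx0 Dp2 DnDp Dn0 by (intro divide_left_mono, auto)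
  have l2: "rx / Dp^2 \<le> mid" unfolding mid_def using rxy Dp2 by (intro divide_right_mono, auto)
  have LHS_le: "LHS \<le> RHS" using l1 l2 mid_le LHSv by simp
  have eqimp: "U * W = W \<and> (\<forall>i<m. P i = W)" if eq: "LHS = RHS"
  proof -
    have e1: "rx / Dn = rx / Dp^2" using l1 l2 mid_le LHSv eq by linarith
    have e2: "rx / Dp^2 = mid" using l1 l2 mid_le LHSv eq by linarith
    have "Dn = Dp^2" using e1 rx0 Dp2 DnDp by (auto simp: field_simps)
    hence "cmod (det (1\<^sub>m n - U * W)) = Dp" unfolding Dn_def using Dp0
      by (metis norm_ge_zero power2_eq_iff_nonneg less_imp_le)
    hence UW: "U * W = W" using G2 Dp_def by simp
    have "rx = ry" using e2 Dp2 unfolding mid_def by (auto simp: field_simps)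
    hence XY: "1\<^sub>m n - S = 1\<^sub>m n - W * W" using rxeq by simp
    have "S = W * W"
    proof (rule eq_matI)
      fix a b assume "a < dim_row (W * W)" "b < dim_col (W * W)"
      hence a: "a < n" and b: "b < n" using Wc by auto
      have "(1\<^sub>m n - S) $$ (a,b) = (1\<^sub>m n - W * W) $$ (a,b)" using XY by simp
      thus "S $$ (a,b) = (W * W) $$ (a,b)" using a b Sc WWc Wc by simp
    qed (use Sc WWc in auto)
    hence "\<forall>i<m. P i = W" unfolding S_def W_def using S_eq_all[OF PH w_sum] w_pos by blast
    thus ?thesis using UW by simp
  qed
  have conv: "LHS = RHS" if ex: "\<exists>Z0. (\<forall>i<m. abs_mat (Z i) = Z0) \<and> char_poly (U * Z0) = char_poly Z0"
  proof -
    obtain Z0 where PZ: "\<forall>i<m. P i = Z0" and cp: "char_poly (U * Z0) = char_poly Z0"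
      using ex unfolding P_def by blast
    have Z0c: "Z0 \<in> carrier_mat n n" using Pc PZ m0 by auto
    have WZ0: "W = Z0" unfolding W_def using wsum_const[OF PZ w_sum Z0c] .
    have SW: "S = W * W" unfolding S_def WZ0 using wsum_const[of m "\<lambda>i. P i * P i" "Z0 * Z0" w n] PZ w_sum Z0c by simp
    have "rx = ry" using dX dY SW by simp
    have sp: "(\<Prod>k<n. 1 - dd i k) = Dp \<and> (\<Prod>k<n. 1 + dd i k) = (\<Prod>k<n. 1 + s k)" if i: "i < m" for i
      using same_spectrum_prods[OF VVu[OF i] V] Pdec[OF i] PZ i WZ0 Wf unfolding Dp_def by simp
    have Uc: "U \<in> carrier_mat n n" using U_unit unitary_carrier by auto
    have "det (1\<^sub>m n - U * W) = poly (char_poly (U * W)) 1" using mult_carrier_mat[OF Uc Wc]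
      by (rule det_one_minus)
    also have "\<dots> = poly (char_poly W) 1" using cp WZ0 by simp
    also have "\<dots> = (\<Prod>k<n. 1 - complex_of_real (s k))" using char_poly_decomp[OF V Wf] by simp
    also have "\<dots> = complex_of_real Dp" unfolding Dp_def by simp
    finally have "Dn = Dp^2" unfolding Dn_def using Dp0 by simp
    hence L: "LHS = mid" unfolding LHSv mid_def using \<open>rx = ry\<close> by simp
    have gsame: "(\<Sum>k<n. gfun (dd i k)) = (\<Sum>k<n. gfun (s k))" if i: "i < m" for i
      unfolding gfun_sum_ln[OF ddb[OF i]] gfun_sum_ln[OF s_b] using sp[OF i] unfolding Dp_def by simp
    have "(\<Sum>i<m. w i * (\<Sum>k<n. gfun (dd i k))) = (\<Sum>i<m. w i * (\<Sum>k<n. gfun (s k)))"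
      using gsame by (intro sum.cong refl, auto)
    also have "\<dots> = (\<Sum>k<n. gfun (s k))" using w_sum by (simp add: sum_distrib_right[symmetric])
    finally have "RHS = mid" unfolding RHSv mid_exp by simp
    thus ?thesis using L by simp
  qed
  show ?thesis
  proof (intro conjI impI iffI)
    show "LHS \<le> RHS" by (rule LHS_le)
  next
    assume "LHS = RHS"
    from eqimp[OF this] have "U * W = W" "\<forall>i<m. P i = W" by auto
    thus "\<exists>Z0. (\<forall>i<m. abs_mat (Z i) = Z0) \<and> char_poly (U * Z0) = char_poly Z0"
      unfolding P_def by (intro exI[of _ W], auto)
  next
    assume "\<exists>Z0. (\<forall>i<m. abs_mat (Z i) = Z0) \<and> char_poly (U * Z0) = char_poly Z0"
    thus "LHS = RHS" by (rule conv)
  next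
    assume eq: "LHS = RHS" and nd: "\<forall>i<m. det (abs_mat (Z i)) \<noteq> 0"
    from eqimp[OF eq] have UW: "U * W = W" and PW: "\<forall>i<m. P i = W" by auto
    have "det W \<noteq> 0" using nd PW m0 unfolding P_def by auto
    thus "U = 1\<^sub>m n" using cancel_invertible[OF Wc _ _ UW] U_unit unitary_carrier by blast
  qed
qed

end
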